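(* Let $R>0$ and let $V\in L^\infty(\mathbb{R};\mathbb{R})$ with $V(x)\to0$ as $|x|\to\infty$ satisfy $$\int_{-R}^R V(x)\,dx<0\quad\text{and}\quad V\le0\ \text{a.e. outside }[-R,R].$$ For $\beta>0$ let $K_\beta=(-\partial_x^2+\beta)^{-1}V:H^1(\mathbb{R})\to H^1(\mathbb{R})$ (compact, symmetric for $\langle u,v\rangle_\beta=\langle u',v'\rangle_{L^2}+\beta\langle u,v\rangle_{L^2}$), and let $\mu_1(\beta)\le\mu_2(\beta)\le\cdots<0$ be its negative eigenvalues counted with multiplicity. Then $K_\beta$ has at least one negative eigenvalue for every $\beta>0$, and $\mu_1(0_+):=\lim_{\beta\to0^+}\mu_1(\beta)=-\infty$. *)

theory Defs
  imports "HOL-Analysis.Analysis"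
begin

text \<open>Membership in H^1(R), at the level of representatives: u is (locally) absolutely
  continuous with a.e. derivative u', and both u and u' are square integrable.\<close>
definition H1 :: "(real \<Rightarrow> real) \<Rightarrow> (real \<Rightarrow> real) \<Rightarrow> bool" where
  "H1 u u' \<longleftrightarrow> u \<in> borel_measurable lborel \<and> u' \<in> borel_measurable lborel
     \<and> integrable lborel (\<lambda>x. (u x)\<^sup>2) \<and> integrable lborel (\<lambda>x. (u' x)\<^sup>2)
     \<and> (\<forall>x. u x = u 0 + (LBINT t=0..x. u' t))"

text \<open>mu is an eigenvalue of K_beta = (-d^2/dx^2 + beta)^{-1} V on H^1 with the inner product
  <u,v>_beta = <u',v'> + beta <u,v>.  By definition of the resolvent,
  <K_beta u, phi>_beta = integral of V u phi, so K_beta u = mu u iff for all phi in H^1: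
  integral V u phi = mu <u, phi>_beta.\<close>
definition K_eigenvalue :: "(real \<Rightarrow> real) \<Rightarrow> real \<Rightarrow> real \<Rightarrow> bool" where
  "K_eigenvalue V \<beta> \<mu> \<longleftrightarrow>
     (\<exists>u u'. H1 u u' \<and> (\<integral>x. (u x)\<^sup>2 \<partial>lborel) > 0 \<and>
        (\<forall>\<phi> \<phi>'. H1 \<phi> \<phi>' \<longrightarrow>
            (\<integral>x. V x * u x * \<phi> x \<partial>lborel)
              = \<mu> * ((\<integral>x. u' x * \<phi>' x \<partial>lborel) + \<beta> * (\<integral>x. u x * \<phi> x \<partial>lborel))))"

definition mu1 :: "(real \<Rightarrow> real) \<Rightarrow> real \<Rightarrow> real" where
  "mu1 V \<beta> = Inf {\<mu>. \<mu> < 0 \<and> K_eigenvalue V \<beta> \<mu>}"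

end

theory Submission
  imports Defs "HOL-Complex_Analysis.Great_Picard"
begin

definition L2 :: "(real \<Rightarrow> real) \<Rightarrow> bool" where
  "L2 f \<longleftrightarrow> f \<in> borel_measurable lborel \<and> integrable lborel (\<lambda>x. (f x)\<^sup>2)"

definition ip :: "(real \<Rightarrow> real) \<Rightarrow> (real \<Rightarrow> real) \<Rightarrow> real" where
  "ip f g = (\<integral>x. f x * g x \<partial>lborel)"

lemma L2_meas: "L2 f \<Longrightarrow> f \<in> borel_measurable lborel"
  by (simp add: L2_def)

lemma abs_prod_le_sq: "\<bar>a * b\<bar> \<le> (a::real)\<^sup>2 + b\<^sup>2"
proof -
  have "2 * \<bar>a\<bar> * \<bar>b\<bar> \<le> \<bar>a\<bar>\<^sup>2 + \<bar>b\<bar>\<^sup>2" by (rule sum_squares_bound)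
  moreover have "0 \<le> \<bar>a\<bar> * \<bar>b\<bar>" by simp
  moreover have "\<bar>a * b\<bar> = \<bar>a\<bar> * \<bar>b\<bar>" by (simp add: abs_mult)
  ultimately show ?thesis by simp
qed

lemma L2_prod_int:
  assumes "L2 f" "L2 g" shows "integrable lborel (\<lambda>x. f x * g x)"
proof (rule Bochner_Integration.integrable_bound)
  show "integrable lborel (\<lambda>x. (f x)\<^sup>2 + (g x)\<^sup>2)" using assms by (simp add: L2_def)
  show "(\<lambda>x. f x * g x) \<in> borel_measurable lborel" using assms unfolding L2_def
    by (intro borel_measurable_times) auto
  show "AE x in lborel. norm (f x * g x) \<le> norm ((f x)\<^sup>2 + (g x)\<^sup>2)"
    using abs_prod_le_sq by (intro AE_I2) simp
qed

lemma L2_lin: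
  assumes "L2 f" "L2 g" shows "L2 (\<lambda>x. a * f x + b * g x)"
proof -
  have [measurable]: "f \<in> borel_measurable lborel" "g \<in> borel_measurable lborel"
    using assms unfolding L2_def by auto
  have m: "(\<lambda>x. a * f x + b * g x) \<in> borel_measurable lborel"
    by measurable
  have "integrable lborel (\<lambda>x. a\<^sup>2 * (f x)\<^sup>2 + (2*a*b) * (f x * g x) + b\<^sup>2 * (g x)\<^sup>2)"
    using assms L2_prod_int[OF assms] unfolding L2_def by auto
  moreover have "(\<lambda>x. a\<^sup>2 * (f x)\<^sup>2 + (2*a*b) * (f x * g x) + b\<^sup>2 * (g x)\<^sup>2) = (\<lambda>x. (a * f x + b * g x)\<^sup>2)"
    by (auto simp: power2_eq_square algebra_simps)
  ultimately show ?thesis using m by (simp add: L2_def)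
qed

lemma L2_add: "L2 f \<Longrightarrow> L2 g \<Longrightarrow> L2 (\<lambda>x. f x + g x)"
  using L2_lin[of f g 1 1] by simp
lemma L2_diff: "L2 f \<Longrightarrow> L2 g \<Longrightarrow> L2 (\<lambda>x. f x - g x)"
  using L2_lin[of f g 1 "-1"] by simp
lemma L2_cmult: "L2 f \<Longrightarrow> L2 (\<lambda>x. a * f x)"
  using L2_lin[of f f a 0] by simp

lemma ip_lin:
  assumes "L2 f" "L2 g" "L2 h"
  shows "ip (\<lambda>x. a * f x + b * g x) h = a * ip f h + b * ip g h"
proof -
  have "ip (\<lambda>x. a * f x + b * g x) h = (\<integral>x. a * (f x * h x) + b * (g x * h x) \<partial>lborel)"
    unfolding ip_def by (rule Bochner_Integration.integral_cong) (auto simp: algebra_simps)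
  also have "\<dots> = a * ip f h + b * ip g h"
    using L2_prod_int[OF assms(1,3)] L2_prod_int[OF assms(2,3)] unfolding ip_def by simp
  finally show ?thesis .
qed

lemma ip_sym: "ip f g = ip g f"
  unfolding ip_def by (simp add: mult.commute)

lemma ip_sq: "ip f f = (\<integral>x. (f x)\<^sup>2 \<partial>lborel)"
  unfolding ip_def by (simp add: power2_eq_square)

lemma ip_nonneg: "ip f f \<ge> 0"
  unfolding ip_sq by simp

lemma ip_expand:
  assumes "L2 f" "L2 g"
  shows "ip (\<lambda>x. f x + t * g x) (\<lambda>x. f x + t * g x) = ip f f + 2 * t * ip f g + t\<^sup>2 * ip g g"
proof -
  have L: "L2 (\<lambda>x. f x + t * g x)" using L2_lin[OF assms, of 1 t] by simp
  have "ip (\<lambda>x. f x + t * g x) (\<lambda>x. f x + t * g x) = ip f (\<lambda>x. f x + t * g x) + t * ip g (\<lambda>x. f x + t * g x)"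
    using ip_lin[OF assms L, of 1 t] by simp
  also have "ip f (\<lambda>x. f x + t * g x) = ip (\<lambda>x. 1 * f x + t * g x) f"
    by (simp add: ip_sym)
  also have "\<dots> = 1 * ip f f + t * ip g f" by (rule ip_lin[OF assms assms(1)])
  also have "ip g (\<lambda>x. f x + t * g x) = ip (\<lambda>x. 1 * f x + t * g x) g"
    by (simp add: ip_sym)
  also have "\<dots> = 1 * ip f g + t * ip g g" by (rule ip_lin[OF assms assms(2)])
  finally show ?thesis using ip_sym[of f g] by (simp add: power2_eq_square algebra_simps)
qed

lemma amgm_sqrt:
  fixes x A B :: real
  assumes "A \<ge> 0" "B \<ge> 0" and H: "\<And>t. t > 0 \<Longrightarrow> x \<le> (t * A + B / t) / 2"
  shows "x \<le> sqrt (A * B)"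
proof (cases "A > 0 \<and> B > 0")
  case True
  define t where "t = sqrt B / sqrt A"
  have t: "t > 0" using True by (simp add: t_def)
  have sA: "sqrt A * sqrt A = A" "sqrt B * sqrt B = B" using True by auto
  have "t * A = sqrt A * sqrt B" using True sA unfolding t_def
    by (simp add: field_simps)
  moreover have "B / t = sqrt A * sqrt B" using True sA unfolding t_def
    by (simp add: field_simps)
  ultimately show ?thesis using H[OF t] by (simp add: real_sqrt_mult)
next
  case False
  then have "A = 0 \<or> B = 0" using assms by auto
  then have AB: "A * B = 0" by auto
  have "x \<le> e" if e: "e > 0" for e
  proof -
    define t where "t = (if A = 0 then B / e + 1 else e / (A + 1))"
    have t: "t > 0" using e assms by (auto simp: t_def intro: add_nonneg_pos)
    have "(t * A + B / t) / 2 \<le> e"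
    proof (cases "A = 0")
      case True
      have "B / t \<le> e" using e assms t unfolding t_def using True
        by (simp add: field_simps)
      then show ?thesis using True e by simp
    next
      case False
      then have B0: "B = 0" using \<open>A = 0 \<or> B = 0\<close> by auto
      have "t * A \<le> e" using e assms False unfolding t_def
        by (simp add: field_simps)
      then show ?thesis using B0 e by simp
    qed
    then show ?thesis using H[OF t] by linarith
  qed
  then have "x \<le> 0" by (meson dense_ge)
  then show ?thesis using AB by (metis real_sqrt_zero)
qed

lemma ip_CS:
  assumes "L2 f" "L2 g"
  shows "\<bar>ip f g\<bar> \<le> sqrt (ip f f * ip g g)"
proof (rule amgm_sqrt[OF ip_nonneg ip_nonneg])
  fix t :: real assume t: "t > 0"
  have i1: "integrable lborel (\<lambda>x. \<bar>f x * g x\<bar>)" using L2_prod_int[OF assms] by simp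
  have i2: "integrable lborel (\<lambda>x. (t * (f x)\<^sup>2 + (g x)\<^sup>2 / t) / 2)"
    using assms unfolding L2_def by auto
  have "\<bar>ip f g\<bar> \<le> (\<integral>x. \<bar>f x * g x\<bar> \<partial>lborel)"
    unfolding ip_def by (rule integral_abs_bound)
  also have "\<dots> \<le> (\<integral>x. (t * (f x)\<^sup>2 + (g x)\<^sup>2 / t) / 2 \<partial>lborel)"
  proof (rule integral_mono[OF i1 i2])
    fix x
    have "2 * (t * \<bar>f x\<bar>) * \<bar>g x\<bar> \<le> (t * \<bar>f x\<bar>)\<^sup>2 + \<bar>g x\<bar>\<^sup>2" by (rule sum_squares_bound)
    then have "2 * t * \<bar>f x * g x\<bar> \<le> t\<^sup>2 * (f x)\<^sup>2 + (g x)\<^sup>2"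
      using t by (simp add: power_mult_distrib abs_mult algebra_simps)
    then have "\<bar>f x * g x\<bar> \<le> (t\<^sup>2 * (f x)\<^sup>2 + (g x)\<^sup>2) / (2 * t)"
      using t by (simp add: field_simps)
    also have "\<dots> = (t * (f x)\<^sup>2 + (g x)\<^sup>2 / t) / 2"
      using t by (simp add: field_simps power2_eq_square)
    finally show "\<bar>f x * g x\<bar> \<le> (t * (f x)\<^sup>2 + (g x)\<^sup>2 / t) / 2" .
  qed
  also have "\<dots> = (t * ip f f + ip g g / t) / 2"
    using assms unfolding L2_def ip_sq by simp
  finally show "\<bar>ip f g\<bar> \<le> (t * ip f f + ip g g / t) / 2" .
qed

lemma L2_ind: "L2 (indicator {a<..<b} :: real \<Rightarrow> real)"
proof -
  have "(\<lambda>x. (indicator {a<..<b} x :: real)\<^sup>2) = indicator {a<..<b}"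
    by (auto simp: indicator_def fun_eq_iff)
  moreover have "integrable lborel (indicator {a<..<b} :: real \<Rightarrow> real)"
    using emeasure_bounded_finite[OF bounded_Ioo[of a b]] by (simp add: integrable_indicator_iff)
  ultimately show ?thesis unfolding L2_def by simp
qed

lemma ip_ind_ind: "a \<le> b \<Longrightarrow> ip (indicator {a<..<b}) (indicator {a<..<b}) = b - a"
proof -
  assume ab: "a \<le> b"
  have "ip (indicator {a<..<b}) (indicator {a<..<b}) = (\<integral>x. indicator {a<..<b} x \<partial>lborel)"
    unfolding ip_def by (rule Bochner_Integration.integral_cong) (auto simp: indicator_def)
  also have "\<dots> = b - a" using ab by simp
  finally show ?thesis .
qed

lemma LBINT_ip: fixes a b :: real shows "a \<le> b \<Longrightarrow> (LBINT t=a..b. h t) = ip (indicator {a<..<b}) h"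
  unfolding ip_def by (simp add: interval_integral_Ioo set_lebesgue_integral_def)

lemma L2_interval_integrable: "L2 h \<Longrightarrow> interval_lebesgue_integrable lborel (ereal a) (ereal b) h"
proof -
  assume h: "L2 h"
  have "set_integrable lborel {c<..<d} h" for c d
    unfolding set_integrable_def using L2_prod_int[OF L2_ind h] by simp
  then show ?thesis unfolding interval_lebesgue_integrable_def by auto
qed

lemma CS_interval:
  assumes "L2 h" shows "\<bar>LBINT t=a..b. h t\<bar> \<le> sqrt (\<bar>b - a\<bar> * ip h h)"
proof (cases "a \<le> b")
  case True
  have "\<bar>LBINT t=a..b. h t\<bar> = \<bar>ip (indicator {a<..<b}) h\<bar>" using LBINT_ip[OF True] by simp
  also have "\<dots> \<le> sqrt (ip (indicator {a<..<b}) (indicator {a<..<b}) * ip h h)"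
    by (rule ip_CS[OF L2_ind assms])
  finally show ?thesis using True ip_ind_ind[OF True] by simp
next
  case False
  then have ba: "b \<le> a" by simp
  have "\<bar>LBINT t=a..b. h t\<bar> = \<bar>LBINT t=b..a. h t\<bar>"
    by (subst interval_integral_endpoints_reverse) simp
  also have "\<dots> = \<bar>ip (indicator {b<..<a}) h\<bar>" using LBINT_ip[OF ba] by simp
  also have "\<dots> \<le> sqrt (ip (indicator {b<..<a}) (indicator {b<..<a}) * ip h h)"
    by (rule ip_CS[OF L2_ind assms])
  finally show ?thesis using ba ip_ind_ind[OF ba] by (simp add: abs_minus_commute)
qed

lemma H1_L2: "H1 u u' \<Longrightarrow> L2 u" "H1 u u' \<Longrightarrow> L2 u'"
  unfolding H1_def L2_def by blast+

lemma H1_diff_int: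
  assumes "H1 u u'" shows "u x - u y = (LBINT t=y..x. u' t)"
proof -
  have f: "\<And>x. u x = u 0 + (LBINT t=0..x. u' t)" using assms unfolding H1_def by blast
  have "(LBINT t=ereal y..ereal 0. u' t) + (LBINT t=ereal 0..ereal x. u' t) = (LBINT t=ereal y..ereal x. u' t)"
    by (rule interval_integral_sum) (simp add: min_def max_def L2_interval_integrable[OF H1_L2(2)[OF assms]])
  moreover have "(LBINT t=ereal y..ereal 0. u' t) = - (LBINT t=ereal 0..ereal y. u' t)"
    by (rule interval_integral_endpoints_reverse)
  ultimately show ?thesis using f[of x] f[of y] unfolding zero_ereal_def by linarith
qed

lemma H1_holder:
  assumes "H1 u u'" shows "\<bar>u x - u y\<bar> \<le> sqrt (\<bar>x - y\<bar> * ip u' u')"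
  using CS_interval[OF H1_L2(2)[OF assms], of y x] H1_diff_int[OF assms, of x y] by simp

lemma H1_intro:
  assumes "L2 u" "L2 u'" "\<And>x. u x = u 0 + (LBINT t=0..x. u' t)"
  shows "H1 u u'"
  using assms unfolding H1_def L2_def by blast

lemma H1_lin:
  assumes "H1 u u'" "H1 v v'"
  shows "H1 (\<lambda>x. a * u x + b * v x) (\<lambda>x. a * u' x + b * v' x)"
proof (rule H1_intro)
  show "L2 (\<lambda>x. a * u x + b * v x)" "L2 (\<lambda>x. a * u' x + b * v' x)"
    using assms by (auto intro!: L2_lin dest: H1_L2)
  fix x :: real
  have iu: "interval_lebesgue_integrable lborel 0 x u'" and iv: "interval_lebesgue_integrable lborel 0 x v'"
    using L2_interval_integrable[OF H1_L2(2)[OF assms(1)], of 0 x]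
      L2_interval_integrable[OF H1_L2(2)[OF assms(2)], of 0 x] by (auto simp: zero_ereal_def)
  have "(LBINT t=0..x. a * u' t + b * v' t) = (LBINT t=0..x. a * u' t) + (LBINT t=0..x. b * v' t)"
    using iu iv by (intro interval_lebesgue_integral_add(2)) auto
  also have "\<dots> = a * (LBINT t=0..x. u' t) + b * (LBINT t=0..x. v' t)" by simp
  finally have c: "(LBINT t=0..x. a * u' t + b * v' t) = a * (LBINT t=0..x. u' t) + b * (LBINT t=0..x. v' t)" .
  have fu: "u x = u 0 + (LBINT t=0..x. u' t)" and fv: "v x = v 0 + (LBINT t=0..x. v' t)"
    using assms unfolding H1_def by blast+
  have "a * u x = a * u 0 + a * (LBINT t=0..x. u' t)" using fu by (metis distrib_left)
  moreover have "b * v x = b * v 0 + b * (LBINT t=0..x. v' t)" using fv by (metis distrib_left)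
  ultimately show "a * u x + b * v x = (a * u 0 + b * v 0) + (LBINT t=0..x. a * u' t + b * v' t)"
    unfolding c by linarith
qed

lemma ip_scale: "ip (\<lambda>x. c * f x) (\<lambda>x. c * f x) = c\<^sup>2 * ip f f"
proof -
  have "ip (\<lambda>x. c * f x) (\<lambda>x. c * f x) = (\<integral>x. c\<^sup>2 * (f x * f x) \<partial>lborel)"
    unfolding ip_def by (rule Bochner_Integration.integral_cong) (auto simp: power2_eq_square)
  then show ?thesis unfolding ip_def by simp
qed

locale pot =
  fixes V :: "real \<Rightarrow> real" and C :: real
  assumes Vm[measurable]: "V \<in> borel_measurable lborel"
    and C0: "C \<ge> 0"
    and VC: "AE x in lborel. \<bar>V x\<bar> \<le> C"
begin

definition QB :: "(real \<Rightarrow> real) \<Rightarrow> (real \<Rightarrow> real) \<Rightarrow> real" where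
  "QB f g = (\<integral>x. V x * f x * g x \<partial>lborel)"

lemma QB_int:
  assumes "L2 f" "L2 g" shows "integrable lborel (\<lambda>x. V x * f x * g x)"
proof (rule Bochner_Integration.integrable_bound)
  show "integrable lborel (\<lambda>x. C * (f x * g x))" using L2_prod_int[OF assms] by simp
  show "(\<lambda>x. V x * f x * g x) \<in> borel_measurable lborel"
    using assms unfolding L2_def by (intro borel_measurable_times) auto
  show "AE x in lborel. norm (V x * f x * g x) \<le> norm (C * (f x * g x))"
    using VC
  proof eventually_elim
    case (elim x)
    then have "\<bar>V x\<bar> * \<bar>f x * g x\<bar> \<le> C * \<bar>f x * g x\<bar>" by (intro mult_right_mono) auto
    then show ?case using C0 by (simp add: abs_mult mult.assoc)
  qed
qed

lemma QB_lin:
  assumes "L2 f" "L2 g" "L2 h"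
  shows "QB (\<lambda>x. a * f x + b * g x) h = a * QB f h + b * QB g h"
proof -
  have "QB (\<lambda>x. a * f x + b * g x) h = (\<integral>x. a * (V x * f x * h x) + b * (V x * g x * h x) \<partial>lborel)"
    unfolding QB_def by (rule Bochner_Integration.integral_cong) (auto simp: algebra_simps)
  also have "\<dots> = a * QB f h + b * QB g h"
    using QB_int[OF assms(1,3)] QB_int[OF assms(2,3)] unfolding QB_def by simp
  finally show ?thesis .
qed

lemma QB_sym: "QB f g = QB g f"
  unfolding QB_def by (simp add: algebra_simps)

lemma QB_expand:
  assumes "L2 f" "L2 g"
  shows "QB (\<lambda>x. f x + t * g x) (\<lambda>x. f x + t * g x) = QB f f + 2 * t * QB f g + t\<^sup>2 * QB g g"
proof -
  have L: "L2 (\<lambda>x. f x + t * g x)" using L2_lin[OF assms, of 1 t] by simp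
  have "QB (\<lambda>x. f x + t * g x) (\<lambda>x. f x + t * g x) = QB f (\<lambda>x. f x + t * g x) + t * QB g (\<lambda>x. f x + t * g x)"
    using QB_lin[OF assms L, of 1 t] by simp
  also have "QB f (\<lambda>x. f x + t * g x) = QB (\<lambda>x. 1 * f x + t * g x) f"
    by (simp add: QB_sym)
  also have "\<dots> = 1 * QB f f + t * QB g f" by (rule QB_lin[OF assms assms(1)])
  also have "QB g (\<lambda>x. f x + t * g x) = QB (\<lambda>x. 1 * f x + t * g x) g"
    by (simp add: QB_sym)
  also have "\<dots> = 1 * QB f g + t * QB g g" by (rule QB_lin[OF assms assms(2)])
  finally show ?thesis using QB_sym[of f g] by (simp add: power2_eq_square algebra_simps)
qed

lemma QB_scale: "QB (\<lambda>x. c * f x) (\<lambda>x. c * f x) = c\<^sup>2 * QB f f"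
proof -
  have "QB (\<lambda>x. c * f x) (\<lambda>x. c * f x) = (\<integral>x. c\<^sup>2 * (V x * f x * f x) \<partial>lborel)"
    unfolding QB_def by (rule Bochner_Integration.integral_cong) (auto simp: power2_eq_square)
  then show ?thesis unfolding QB_def by simp
qed

lemma QB_bound:
  assumes "L2 f" shows "\<bar>QB f f\<bar> \<le> C * ip f f"
proof -
  have "\<bar>QB f f\<bar> \<le> (\<integral>x. \<bar>V x * f x * f x\<bar> \<partial>lborel)"
    unfolding QB_def by (rule integral_abs_bound)
  also have "\<dots> \<le> (\<integral>x. C * (f x * f x) \<partial>lborel)"
  proof (rule integral_mono_AE)
    show "integrable lborel (\<lambda>x. \<bar>V x * f x * f x\<bar>)" using QB_int[OF assms assms] by simp
    show "integrable lborel (\<lambda>x. C * (f x * f x))" using L2_prod_int[OF assms assms] by simp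
    show "AE x in lborel. \<bar>V x * f x * f x\<bar> \<le> C * (f x * f x)"
      using VC
    proof eventually_elim
      case (elim x)
      have "\<bar>V x\<bar> * (f x * f x) \<le> C * (f x * f x)" using elim by (intro mult_right_mono) auto
      then show ?case by (simp add: abs_mult mult.assoc)
    qed
  qed
  also have "\<dots> = C * ip f f" unfolding ip_def by simp
  finally show ?thesis .
qed

lemma QB_decay:
  assumes f: "L2 f" and e: "e \<ge> 0" and r: "AE x in lborel. \<bar>x\<bar> > r \<longrightarrow> \<bar>V x\<bar> < e"
  shows "QB f f \<ge> - C * (\<integral>x. indicator {-r..r} x * (f x)\<^sup>2 \<partial>lborel) - e * ip f f"
proof -
  have i1: "integrable lborel (\<lambda>x. indicator {-r..r} x * (f x)\<^sup>2)"
    using integrable_real_mult_indicator[of "{-r..r}" lborel "\<lambda>x. (f x)\<^sup>2"] f by (simp add: L2_def mult.commute)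
  have "- C * (\<integral>x. indicator {-r..r} x * (f x)\<^sup>2 \<partial>lborel) - e * ip f f
      = (\<integral>x. - C * (indicator {-r..r} x * (f x)\<^sup>2) - e * (f x)\<^sup>2 \<partial>lborel)"
    using i1 f unfolding L2_def ip_sq by simp
  also have "\<dots> \<le> QB f f" unfolding QB_def
  proof (rule integral_mono_AE)
    show "integrable lborel (\<lambda>x. - C * (indicator {-r..r} x * (f x)\<^sup>2) - e * (f x)\<^sup>2)"
      using i1 f unfolding L2_def by simp
    show "integrable lborel (\<lambda>x. V x * f x * f x)" using QB_int[OF f f] .
    show "AE x in lborel. - C * (indicator {-r..r} x * (f x)\<^sup>2) - e * (f x)\<^sup>2 \<le> V x * f x * f x"
      using VC r
    proof eventually_elim
      case (elim x)
      show ?case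
      proof (cases "\<bar>x\<bar> > r")
        case True
        then have "\<bar>V x\<bar> \<le> e" using elim by simp
        then have "- e \<le> V x" by (simp add: abs_le_iff)
        then have "- e * (f x)\<^sup>2 \<le> V x * (f x)\<^sup>2" by (rule mult_right_mono) simp
        moreover have "0 \<le> C * (indicator {-r..r} x * (f x)\<^sup>2)" using C0 by (simp add: indicator_def)
        ultimately show ?thesis by (simp add: power2_eq_square mult.assoc)
      next
        case False
        then have "indicator {-r..r} x = (1::real)" by (auto simp: indicator_def abs_less_iff)
        have "- C \<le> V x" using elim by (simp add: abs_le_iff)
        then have "- C * (f x)\<^sup>2 \<le> V x * (f x)\<^sup>2" by (rule mult_right_mono) simp
        moreover note \<open>indicator {-r..r} x = (1::real)\<close>
        moreover have "0 \<le> e * (f x)\<^sup>2" using e by simp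
        ultimately show ?thesis by (simp add: power2_eq_square mult.assoc)
      qed
    qed
  qed
  finally show ?thesis .
qed

definition E :: "real \<Rightarrow> (real \<Rightarrow> real) \<Rightarrow> (real \<Rightarrow> real) \<Rightarrow> real" where
  "E \<beta> u u' = ip u' u' + \<beta> * ip u u"

definition EB :: "real \<Rightarrow> (real \<Rightarrow> real) \<Rightarrow> (real \<Rightarrow> real) \<Rightarrow> (real \<Rightarrow> real) \<Rightarrow> (real \<Rightarrow> real) \<Rightarrow> real" where
  "EB \<beta> u u' v v' = ip u' v' + \<beta> * ip u v"

lemma E_expand:
  assumes "H1 u u'" "H1 v v'"
  shows "E \<beta> (\<lambda>x. u x + t * v x) (\<lambda>x. u' x + t * v' x) = E \<beta> u u' + 2 * t * EB \<beta> u u' v v' + t\<^sup>2 * E \<beta> v v'"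
  unfolding E_def EB_def
  using ip_expand[OF H1_L2(1)[OF assms(1)] H1_L2(1)[OF assms(2)], of t]
    ip_expand[OF H1_L2(2)[OF assms(1)] H1_L2(2)[OF assms(2)], of t]
  by (simp add: algebra_simps)

lemma E_scale: "E \<beta> (\<lambda>x. c * u x) (\<lambda>x. c * u' x) = c\<^sup>2 * E \<beta> u u'"
  unfolding E_def ip_scale by (simp add: algebra_simps)

lemma E_nonneg: "\<beta> \<ge> 0 \<Longrightarrow> E \<beta> u u' \<ge> 0"
  unfolding E_def using ip_nonneg[of u] ip_nonneg[of u'] by simp

lemma E_ge: "\<beta> \<ge> 0 \<Longrightarrow> E \<beta> u u' \<ge> \<beta> * ip u u"
  unfolding E_def using ip_nonneg[of u'] by simp

lemma E_ge': "\<beta> \<ge> 0 \<Longrightarrow> E \<beta> u u' \<ge> ip u' u'"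
  unfolding E_def using ip_nonneg[of u] by simp

end

lemma fatou_L2:
  fixes f :: "nat \<Rightarrow> real \<Rightarrow> real"
  assumes fm[measurable]: "\<And>k. f k \<in> borel_measurable lborel"
    and hm[measurable]: "h \<in> borel_measurable lborel" and gm[measurable]: "g \<in> borel_measurable lborel"
    and lim: "AE x in lborel. (\<lambda>k. f k x) \<longlonglongrightarrow> g x"
    and bnd: "\<And>k. k \<ge> N \<Longrightarrow> integrable lborel (\<lambda>x. (h x - f k x)\<^sup>2) \<and> (\<integral>x. (h x - f k x)\<^sup>2 \<partial>lborel) \<le> e"
  shows "integrable lborel (\<lambda>x. (h x - g x)\<^sup>2) \<and> (\<integral>x. (h x - g x)\<^sup>2 \<partial>lborel) \<le> e"
proof -
  have "0 \<le> (\<integral>x. (h x - f N x)\<^sup>2 \<partial>lborel)" by (rule integral_nonneg_AE) simp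
  then have e0: "e \<ge> 0" using bnd[of N] by linarith
  have "(\<integral>\<^sup>+x. ennreal ((h x - g x)\<^sup>2) \<partial>lborel) = (\<integral>\<^sup>+x. liminf (\<lambda>k. ennreal ((h x - f k x)\<^sup>2)) \<partial>lborel)"
  proof (rule nn_integral_cong_AE)
    show "AE x in lborel. ennreal ((h x - g x)\<^sup>2) = liminf (\<lambda>k. ennreal ((h x - f k x)\<^sup>2))"
      using lim
    proof eventually_elim
      case (elim x)
      have "(\<lambda>k. ennreal ((h x - f k x)\<^sup>2)) \<longlonglongrightarrow> ennreal ((h x - g x)\<^sup>2)"
        by (intro tendsto_ennrealI tendsto_intros elim)
      from lim_imp_Liminf[OF trivial_limit_sequentially this] show ?case by simp
    qed
  qed
  also have "\<dots> \<le> liminf (\<lambda>k. \<integral>\<^sup>+x. ennreal ((h x - f k x)\<^sup>2) \<partial>lborel)"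
    by (rule nn_integral_liminf) measurable
  also have "\<dots> \<le> ennreal e"
  proof (rule Liminf_le)
    show "\<forall>\<^sub>F k in sequentially. (\<integral>\<^sup>+x. ennreal ((h x - f k x)\<^sup>2) \<partial>lborel) \<le> ennreal e"
      unfolding eventually_sequentially
    proof (intro exI allI impI)
      fix k assume k: "N \<le> k"
      have "(\<integral>\<^sup>+x. ennreal ((h x - f k x)\<^sup>2) \<partial>lborel) = ennreal (\<integral>x. (h x - f k x)\<^sup>2 \<partial>lborel)"
        using bnd[OF k] by (intro nn_integral_eq_integral) auto
      then show "(\<integral>\<^sup>+x. ennreal ((h x - f k x)\<^sup>2) \<partial>lborel) \<le> ennreal e"
        using bnd[OF k] by (simp add: ennreal_leI)
    qed
  qed simp
  finally have F: "(\<integral>\<^sup>+x. ennreal ((h x - g x)\<^sup>2) \<partial>lborel) \<le> ennreal e" .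
  have I: "integrable lborel (\<lambda>x. (h x - g x)\<^sup>2)"
  proof (rule integrableI_nonneg)
    show "(\<lambda>x. (h x - g x)\<^sup>2) \<in> borel_measurable lborel" by measurable
    show "AE x in lborel. 0 \<le> (h x - g x)\<^sup>2" by simp
    show "(\<integral>\<^sup>+x. ennreal ((h x - g x)\<^sup>2) \<partial>lborel) < \<infinity>"
      using le_less_trans[OF F ennreal_less_top] by simp
  qed
  have "ennreal (\<integral>x. (h x - g x)\<^sup>2 \<partial>lborel) = (\<integral>\<^sup>+x. ennreal ((h x - g x)\<^sup>2) \<partial>lborel)"
    using I by (intro nn_integral_eq_integral[symmetric]) auto
  with F have "ennreal (\<integral>x. (h x - g x)\<^sup>2 \<partial>lborel) \<le> ennreal e" by simp
  then have "(\<integral>x. (h x - g x)\<^sup>2 \<partial>lborel) \<le> e" using e0 by (simp add: ennreal_le_iff)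
  with I show ?thesis by simp
qed

lemma summable_from_enn:
  fixes a :: "nat \<Rightarrow> real"
  assumes fin: "(\<Sum>j. ennreal (2^j * (a j)\<^sup>2)) \<noteq> \<infinity>"
  shows "summable a"
proof -
  define S where "S = (\<Sum>j. ennreal (2^j * (a j)\<^sup>2))"
  define s where "s = enn2real S"
  have "S < top" using fin unfolding S_def by (simp add: less_top[symmetric])
  then have "ennreal s = S" unfolding s_def by (rule ennreal_enn2real)
  then have Ss: "S = ennreal s" by (rule sym)
  have s0: "s \<ge> 0" unfolding s_def by (rule enn2real_nonneg)
  have db: "\<bar>a j\<bar> \<le> sqrt s * sqrt (1/2) ^ j" for j
  proof -
    have "(\<Sum>i\<in>{j}. ennreal (2^i * (a i)\<^sup>2)) \<le> S"
      unfolding S_def by (rule sum_le_suminf) (auto intro: summableI)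
    then have "ennreal (2^j * (a j)\<^sup>2) \<le> ennreal s" unfolding Ss by simp
    then have "2^j * (a j)\<^sup>2 \<le> s" by (subst (asm) ennreal_le_iff[OF s0])
    then have "(a j)\<^sup>2 \<le> s * (1/2)^j" by (simp add: field_simps power_divide)
    then have "sqrt ((a j)\<^sup>2) \<le> sqrt (s * (1/2)^j)" by (rule real_sqrt_le_mono)
    moreover have "sqrt ((a j)\<^sup>2) = \<bar>a j\<bar>" by (rule real_sqrt_abs)
    moreover have "sqrt (s * (1/2)^j) = sqrt s * sqrt (1/2) ^ j" by (simp only: real_sqrt_mult real_sqrt_power)
    ultimately show ?thesis by simp
  qed
  have "summable (\<lambda>j. sqrt s * sqrt (1/2) ^ j)"
    by (intro summable_mult summable_geometric) simp
  then show "summable a"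
    by (rule summable_comparison_test') (use db in simp)
qed

lemma L2_complete:
  fixes f :: "nat \<Rightarrow> real \<Rightarrow> real"
  assumes L: "\<And>k. L2 (f k)"
    and cau: "\<And>e. e > 0 \<Longrightarrow> \<exists>N. \<forall>n\<ge>N. \<forall>k\<ge>N. ip (\<lambda>x. f n x - f k x) (\<lambda>x. f n x - f k x) < e"
  shows "\<exists>g. L2 g \<and> (\<lambda>n. ip (\<lambda>x. f n x - g x) (\<lambda>x. f n x - g x)) \<longlonglongrightarrow> 0"
proof -
  have fm[measurable]: "\<And>k. f k \<in> borel_measurable lborel" using L by (simp add: L2_def)
  have "\<forall>j. \<exists>N. \<forall>n\<ge>N. \<forall>k\<ge>N. ip (\<lambda>x. f n x - f k x) (\<lambda>x. f n x - f k x) < (1/8)^j"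
    using cau by simp
  then obtain N where N: "\<And>j n k. n \<ge> N j \<Longrightarrow> k \<ge> N j \<Longrightarrow> ip (\<lambda>x. f n x - f k x) (\<lambda>x. f n x - f k x) < (1/8)^j"
    by metis
  define M where "M j = (\<Sum>i\<le>j. N i) + j" for j
  have MN: "M j \<ge> N j" for j
    unfolding M_def using member_le_sum[of j "{..j}" N] by simp
  have Msuc: "M (Suc j) = M j + N (Suc j) + 1" for j
    unfolding M_def by simp
  have Mge: "M j \<ge> j" for j unfolding M_def by simp
  have Mmono: "M j \<le> M k" if "j \<le> k" for j k
    using that
  proof (induction k)
    case (Suc k) then show ?case using Msuc[of k] by (cases "j = Suc k") auto
  qed simp
  define d where "d j x = f (M (Suc j)) x - f (M j) x" for j x
  have dL2: "L2 (d j)" for j unfolding d_def[abs_def] by (intro L2_diff L)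
  have dm[measurable]: "d j \<in> borel_measurable lborel" for j using dL2 by (simp add: L2_def)
  have dip: "ip (d j) (d j) < (1/8)^j" for j
    unfolding d_def[abs_def] using N[of j "M (Suc j)" "M j"] MN[of j] Mmono[of j "Suc j"] by simp
  define S where "S x = (\<Sum>j. ennreal (2^j * (d j x)\<^sup>2))" for x
  have Sm: "S \<in> borel_measurable lborel" unfolding S_def by measurable
  have "(\<integral>\<^sup>+x. S x \<partial>lborel) = (\<Sum>j. \<integral>\<^sup>+x. ennreal (2^j * (d j x)\<^sup>2) \<partial>lborel)"
    unfolding S_def by (rule nn_integral_suminf) measurable
  also have "\<dots> = (\<Sum>j. ennreal (2^j * ip (d j) (d j)))"
  proof (rule suminf_cong)
    fix j
    have "integrable lborel (\<lambda>x. 2^j * (d j x)\<^sup>2)" using dL2[of j] by (simp add: L2_def)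
    then have "(\<integral>\<^sup>+x. ennreal (2^j * (d j x)\<^sup>2) \<partial>lborel) = ennreal (\<integral>x. 2^j * (d j x)\<^sup>2 \<partial>lborel)"
      by (intro nn_integral_eq_integral) auto
    then show "(\<integral>\<^sup>+x. ennreal (2^j * (d j x)\<^sup>2) \<partial>lborel) = ennreal (2^j * ip (d j) (d j))"
      by (simp add: ip_sq)
  qed
  also have "\<dots> \<le> (\<Sum>j. ennreal ((1/4)^j))"
  proof (rule suminf_le)
    fix j
    have a: "2^j * ip (d j) (d j) \<le> 2^j * (1/8)^j" using dip[of j] by simp
    have "(2::real)^j * (1/8)^j = (2 * (1/8))^j" by (rule power_mult_distrib[symmetric])
    moreover have "(2 * (1/8::real)) = 1/4" by simp
    ultimately have e1: "(2::real)^j * (1/8)^j = (1/4)^j" by (simp only:)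
    have "2^j * ip (d j) (d j) \<le> (1/4)^j" using a e1 by linarith
    then show "ennreal (2^j * ip (d j) (d j)) \<le> ennreal ((1/4)^j)" by (rule ennreal_leI)
  qed (auto intro: summableI)
  finally have Sle: "(\<integral>\<^sup>+x. S x \<partial>lborel) \<le> (\<Sum>j. ennreal ((1/4::real)^j))" .
  have T: "(\<Sum>j. ennreal ((1/4::real)^j)) \<noteq> top"
    by (rule ennreal_suminf_neq_top[OF summable_geometric]) auto
  have Sfin: "(\<integral>\<^sup>+x. S x \<partial>lborel) \<noteq> \<infinity>"
  proof
    assume "(\<integral>\<^sup>+x. S x \<partial>lborel) = \<infinity>"
    with Sle have "top \<le> (\<Sum>j. ennreal ((1/4::real)^j))" by simp
    with T show False by (simp add: top_unique)
  qed
  have AES: "AE x in lborel. S x \<noteq> \<infinity>" by (rule nn_integral_PInf_AE[OF Sm Sfin])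
  have conv: "AE x in lborel. convergent (\<lambda>j. f (M j) x)"
    using AES
  proof eventually_elim
    case (elim x)
    have sd: "summable (\<lambda>j. d j x)"
      by (rule summable_from_enn) (use elim in \<open>simp add: S_def\<close>)
    have tel: "f (M j) x = f (M 0) x + (\<Sum>i<j. d i x)" for j
      unfolding d_def using sum_lessThan_telescope[of "\<lambda>i. f (M i) x" j] by simp
    have "(\<lambda>j. f (M 0) x + (\<Sum>i<j. d i x)) \<longlonglongrightarrow> f (M 0) x + suminf (\<lambda>i. d i x)"
      by (intro tendsto_add tendsto_const summable_LIMSEQ sd)
    then show ?case unfolding tel[symmetric] by (rule convergentI)
  qed
  define g where "g x = lim (\<lambda>j. f (M j) x)" for x
  have gm[measurable]: "g \<in> borel_measurable lborel" unfolding g_def[abs_def] by measurable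
  have glim: "AE x in lborel. (\<lambda>j. f (M j) x) \<longlonglongrightarrow> g x"
    using conv by eventually_elim (simp add: g_def convergent_LIMSEQ_iff)
  have key: "\<exists>K. \<forall>n\<ge>K. integrable lborel (\<lambda>x. (f n x - g x)\<^sup>2) \<and> (\<integral>x. (f n x - g x)\<^sup>2 \<partial>lborel) \<le> e"
    if e: "e > 0" for e
  proof -
    obtain K where K: "\<And>n k. n \<ge> K \<Longrightarrow> k \<ge> K \<Longrightarrow> ip (\<lambda>x. f n x - f k x) (\<lambda>x. f n x - f k x) < e"
      using cau[OF e] by blast
    show ?thesis
    proof (intro exI allI impI)
      fix n assume n: "n \<ge> K"
      show "integrable lborel (\<lambda>x. (f n x - g x)\<^sup>2) \<and> (\<integral>x. (f n x - g x)\<^sup>2 \<partial>lborel) \<le> e"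
      proof (rule fatou_L2[where f="\<lambda>j. f (M j)" and N=K])
        fix k assume k: "K \<le> k"
        have "M k \<ge> K" using Mge[of k] k by simp
        then have "ip (\<lambda>x. f n x - f (M k) x) (\<lambda>x. f n x - f (M k) x) < e" using K n by simp
        moreover have "L2 (\<lambda>x. f n x - f (M k) x)" by (intro L2_diff L)
        ultimately show "integrable lborel (\<lambda>x. (f n x - f (M k) x)\<^sup>2) \<and> (\<integral>x. (f n x - f (M k) x)\<^sup>2 \<partial>lborel) \<le> e"
          by (simp add: L2_def ip_sq)
      qed (use glim in auto)
    qed
  qed
  obtain K1 where K1: "\<And>n. n \<ge> K1 \<Longrightarrow> integrable lborel (\<lambda>x. (f n x - g x)\<^sup>2)"
    using key[of 1] by auto
  have "L2 (\<lambda>x. f K1 x - g x)" using K1[of K1] by (simp add: L2_def)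
  from L2_diff[OF L[of K1] this] have Lg: "L2 g" by simp
  have "(\<lambda>n. ip (\<lambda>x. f n x - g x) (\<lambda>x. f n x - g x)) \<longlonglongrightarrow> 0"
  proof (rule metric_LIMSEQ_I)
    fix r :: real assume r: "r > 0"
    obtain K where K: "\<And>n. n \<ge> K \<Longrightarrow> (\<integral>x. (f n x - g x)\<^sup>2 \<partial>lborel) \<le> r / 2"
      using key[of "r/2"] r by auto
    show "\<exists>no. \<forall>n\<ge>no. dist (ip (\<lambda>x. f n x - g x) (\<lambda>x. f n x - g x)) 0 < r"
    proof (intro exI allI impI)
      fix n assume "n \<ge> K"
      then have "ip (\<lambda>x. f n x - g x) (\<lambda>x. f n x - g x) \<le> r / 2" using K by (simp add: ip_sq)
      moreover have "0 \<le> ip (\<lambda>x. f n x - g x) (\<lambda>x. f n x - g x)" by (rule ip_nonneg)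
      ultimately show "dist (ip (\<lambda>x. f n x - g x) (\<lambda>x. f n x - g x)) 0 < r" using r by simp
    qed
  qed
  with Lg show ?thesis by blast
qed

lemma H1_diff: "H1 u u' \<Longrightarrow> H1 v v' \<Longrightarrow> H1 (\<lambda>x. u x - v x) (\<lambda>x. u' x - v' x)"
  using H1_lin[of u u' v v' 1 "-1"] by simp

lemma H1_add: "H1 u u' \<Longrightarrow> H1 v v' \<Longrightarrow> H1 (\<lambda>x. u x + v x) (\<lambda>x. u' x + v' x)"
  using H1_lin[of u u' v v' 1 1] by simp

lemma H1_scale: "H1 u u' \<Longrightarrow> H1 (\<lambda>x. c * u x) (\<lambda>x. c * u' x)"
  using H1_lin[of u u' u u' c 0] by simp

lemma ip_diff_sym: "ip (\<lambda>x. a x - b x) (\<lambda>x. a x - b x) = ip (\<lambda>x. b x - a x) (\<lambda>x. b x - a x)"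
  unfolding ip_def by (simp add: algebra_simps)

lemma quad_zero:
  fixes b c :: real
  assumes H: "\<And>t. 2 * t * b + t\<^sup>2 * c \<ge> 0"
  shows "b = 0"
proof (rule ccontr)
  assume b: "b \<noteq> 0"
  define t where "t = - b / (\<bar>c\<bar> + 1)"
  have c1: "\<bar>c\<bar> + 1 > 0" by simp
  have "t\<^sup>2 * c \<le> t\<^sup>2 * \<bar>c\<bar>" by (intro mult_left_mono) auto
  also have "\<dots> = b\<^sup>2 * \<bar>c\<bar> / (\<bar>c\<bar> + 1)\<^sup>2" unfolding t_def by (simp add: power_divide)
  also have "\<dots> = (b\<^sup>2 / (\<bar>c\<bar> + 1)) * (\<bar>c\<bar> / (\<bar>c\<bar> + 1))"
    by (simp add: power2_eq_square)
  also have "\<dots> \<le> (b\<^sup>2 / (\<bar>c\<bar> + 1)) * 1"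
    using c1 by (intro mult_left_mono) auto
  also have "\<dots> = b\<^sup>2 / (\<bar>c\<bar> + 1)" by simp
  finally have X: "t\<^sup>2 * c \<le> b\<^sup>2 / (\<bar>c\<bar> + 1)" .
  have Y: "2 * t * b = - 2 * (b\<^sup>2 / (\<bar>c\<bar> + 1))" unfolding t_def using c1
    by (simp add: power2_eq_square field_simps)
  have "2 * t * b + t\<^sup>2 * c \<le> - (b\<^sup>2 / (\<bar>c\<bar> + 1))" using X Y by linarith
  moreover have "b\<^sup>2 / (\<bar>c\<bar> + 1) > 0" using b c1 by simp
  ultimately show False using H[of t] by linarith
qed

lemma H1_sup:
  assumes "H1 u u'" shows "\<bar>u x\<bar> \<le> (1 + ip u u) / 2 + sqrt (ip u' u')"
proof -
  define I where "I = (indicator {x<..<x+1} :: real \<Rightarrow> real)"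
  define D where "D = sqrt (ip u' u')"
  have Lu: "L2 u" using H1_L2[OF assms] by simp
  have um[measurable]: "u \<in> borel_measurable lborel" using Lu by (simp add: L2_def)
  have intI: "integrable lborel I" unfolding I_def
    using emeasure_bounded_finite[OF bounded_Ioo[of x "x+1"]] by (simp add: integrable_indicator_iff)
  have intI_int: "(\<integral>y. I y \<partial>lborel) = 1" unfolding I_def by simp
  have intu2: "integrable lborel (\<lambda>y. I y * (u y)\<^sup>2)"
    unfolding I_def using integrable_real_mult_indicator[of "{x<..<x+1}" lborel "\<lambda>y. (u y)\<^sup>2"] Lu
    by (simp add: L2_def mult.commute)
  have pt: "I y * \<bar>u x\<bar> \<le> I y * ((1 + (u y)\<^sup>2) / 2 + D)" for y
  proof (cases "y \<in> {x<..<x+1}")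
    case True
    then have I1: "I y = 1" unfolding I_def by simp
    have "\<bar>u x - u y\<bar> \<le> sqrt (\<bar>x - y\<bar> * ip u' u')" by (rule H1_holder[OF assms])
    also have "\<dots> \<le> sqrt (1 * ip u' u')"
      using True ip_nonneg[of u'] by (intro real_sqrt_le_mono mult_right_mono) auto
    finally have a: "\<bar>u x - u y\<bar> \<le> D" unfolding D_def by simp
    have "2 * 1 * \<bar>u y\<bar> \<le> 1\<^sup>2 + \<bar>u y\<bar>\<^sup>2" by (rule sum_squares_bound)
    then have b: "\<bar>u y\<bar> \<le> (1 + (u y)\<^sup>2) / 2" by simp
    have "\<bar>u x\<bar> \<le> \<bar>u y\<bar> + \<bar>u x - u y\<bar>" using abs_triangle_ineq[of "u y" "u x - u y"] by simp
    then show ?thesis unfolding I1 mult_1 using a b by linarith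
  next
    case False
    then show ?thesis unfolding I_def by simp
  qed
  have "\<bar>u x\<bar> = (\<integral>y. I y * \<bar>u x\<bar> \<partial>lborel)" using intI_int by simp
  also have "\<dots> \<le> (\<integral>y. I y * ((1 + (u y)\<^sup>2) / 2 + D) \<partial>lborel)"
  proof (rule integral_mono)
    show "integrable lborel (\<lambda>y. I y * \<bar>u x\<bar>)" using intI by simp
    have "integrable lborel (\<lambda>y. I y * (1/2 + D) + (I y * (u y)\<^sup>2) / 2)" using intI intu2 by simp
    moreover have "(\<lambda>y. I y * (1/2 + D) + (I y * (u y)\<^sup>2) / 2) = (\<lambda>y. I y * ((1 + (u y)\<^sup>2) / 2 + D))"
      by (auto simp: algebra_simps fun_eq_iff add_divide_distrib)
    ultimately show "integrable lborel (\<lambda>y. I y * ((1 + (u y)\<^sup>2) / 2 + D))" by simp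
  qed (rule pt)
  also have "\<dots> = (\<integral>y. I y * (1/2 + D) + (I y * (u y)\<^sup>2) / 2 \<partial>lborel)"
    by (rule Bochner_Integration.integral_cong) (auto simp: algebra_simps add_divide_distrib)
  also have "\<dots> = (1/2 + D) + (\<integral>y. I y * (u y)\<^sup>2 \<partial>lborel) / 2"
    using intI intu2 intI_int by simp
  also have "(\<integral>y. I y * (u y)\<^sup>2 \<partial>lborel) \<le> (\<integral>y. (u y)\<^sup>2 \<partial>lborel)"
  proof (rule integral_mono[OF intu2])
    show "integrable lborel (\<lambda>y. (u y)\<^sup>2)" using Lu by (simp add: L2_def)
    show "I y * (u y)\<^sup>2 \<le> (u y)\<^sup>2" for y unfolding I_def by (simp add: indicator_def)
  qed
  finally show ?thesis unfolding D_def ip_sq by (simp add: add_divide_distrib)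
qed

context pot
begin

definition Ray :: "real \<Rightarrow> real set" where
  "Ray \<beta> = {QB u u / E \<beta> u u' | u u'. H1 u u' \<and> E \<beta> u u' > 0}"

lemma ip_le_E: "\<beta> > 0 \<Longrightarrow> ip u u \<le> E \<beta> u u' / \<beta>"
  using E_ge[of \<beta> u u'] by (simp add: field_simps mult.commute)

lemma QB_ge:
  assumes b: "\<beta> > 0" and u: "H1 u u'" shows "QB u u \<ge> -(C / \<beta>) * E \<beta> u u'"
proof -
  have "- C * ip u u \<le> QB u u" using QB_bound[OF H1_L2(1)[OF u]] by linarith
  moreover have "C * ip u u \<le> C * (E \<beta> u u' / \<beta>)" using ip_le_E[OF b] C0 by (intro mult_left_mono) auto
  ultimately show ?thesis by (simp add: field_simps)
qed

lemma Ray_bdd: "\<beta> > 0 \<Longrightarrow> bdd_below (Ray \<beta>)"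
proof -
  assume b: "\<beta> > 0"
  have "- (C / \<beta>) \<le> r" if r: "r \<in> Ray \<beta>" for r
  proof -
    obtain u u' where u: "H1 u u'" "E \<beta> u u' > 0" "r = QB u u / E \<beta> u u'"
      using r unfolding Ray_def by blast
    have "-(C / \<beta>) * E \<beta> u u' \<le> QB u u" by (rule QB_ge[OF b u(1)])
    also have "QB u u = r * E \<beta> u u'" using u(2,3) by simp
    finally show ?thesis using u(2) by (simp only: mult_le_cancel_right_pos)
  qed
  then show ?thesis by (rule bdd_belowI)
qed

lemma B_nonneg:
  assumes b: "\<beta> > 0" and u: "H1 u u'" shows "Inf (Ray \<beta>) * E \<beta> u u' \<le> QB u u"
proof (cases "E \<beta> u u' > 0")
  case True
  have "QB u u / E \<beta> u u' \<in> Ray \<beta>" unfolding Ray_def using u True by blast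
  then have "Inf (Ray \<beta>) \<le> QB u u / E \<beta> u u'" by (rule cInf_lower[OF _ Ray_bdd[OF b]])
  then show ?thesis using True by (simp add: field_simps)
next
  case False
  then have E0: "E \<beta> u u' = 0" using E_nonneg[of \<beta> u u'] b by simp
  then have "ip u u = 0" using ip_le_E[OF b, of u u'] ip_nonneg[of u] by simp
  then have "QB u u = 0" using QB_bound[OF H1_L2(1)[OF u]] C0 by simp
  then show ?thesis using E0 by simp
qed

lemma QB_par:
  assumes "L2 f" "L2 g"
  shows "QB (\<lambda>x. f x + g x) (\<lambda>x. f x + g x) + QB (\<lambda>x. f x - g x) (\<lambda>x. f x - g x) = 2 * QB f f + 2 * QB g g"
  using QB_expand[OF assms, of 1] QB_expand[OF assms, of "-1"] by simp

lemma E_par: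
  assumes "H1 f f'" "H1 g g'"
  shows "E \<beta> (\<lambda>x. f x + g x) (\<lambda>x. f' x + g' x) + E \<beta> (\<lambda>x. f x - g x) (\<lambda>x. f' x - g' x) = 2 * E \<beta> f f' + 2 * E \<beta> g g'"
  using E_expand[OF assms, of \<beta> 1] E_expand[OF assms, of \<beta> "-1"] by simp

lemma min_seq:
  assumes b: "\<beta> > 0" and w: "H1 w w'" "E \<beta> w w' > 0"
  shows "\<exists>U U'. \<forall>n. H1 (U n) (U' n) \<and> E \<beta> (U n) (U' n) = 1 \<and> QB (U n) (U n) < Inf (Ray \<beta>) + 1 / Suc n"
proof -
  have ne: "Ray \<beta> \<noteq> {}" unfolding Ray_def using w by blast
  have "\<exists>u u'. H1 u u' \<and> E \<beta> u u' = 1 \<and> QB u u < Inf (Ray \<beta>) + 1 / Suc n" for n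
  proof -
    have "Inf (Ray \<beta>) < Inf (Ray \<beta>) + 1 / Suc n" by simp
    from cInf_lessD[OF ne this] obtain r where r: "r \<in> Ray \<beta>" "r < Inf (Ray \<beta>) + 1 / Suc n" by blast
    then obtain u u' where u: "H1 u u'" "E \<beta> u u' > 0" "r = QB u u / E \<beta> u u'"
      unfolding Ray_def by blast
    define c where "c = 1 / sqrt (E \<beta> u u')"
    have c2: "c\<^sup>2 = 1 / E \<beta> u u'" unfolding c_def using u(2) by (simp add: power_divide)
    have "H1 (\<lambda>x. c * u x) (\<lambda>x. c * u' x)" by (rule H1_scale[OF u(1)])
    moreover have "E \<beta> (\<lambda>x. c * u x) (\<lambda>x. c * u' x) = 1" unfolding E_scale c2 using u(2) by simp
    moreover have "QB (\<lambda>x. c * u x) (\<lambda>x. c * u x) = r" unfolding QB_scale c2 u(3) by simp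
    ultimately show ?thesis using r(2) by blast
  qed
  then show ?thesis by metis
qed

lemma compact_sub:
  fixes U U' :: "nat \<Rightarrow> real \<Rightarrow> real"
  assumes b: "\<beta> > 0" and U: "\<And>n. H1 (U n) (U' n)" "\<And>n. E \<beta> (U n) (U' n) = 1"
  shows "\<exists>k u. strict_mono k \<and> (\<forall>x. (\<lambda>n. U (k n) x) \<longlonglongrightarrow> u x)"
proof -
  define Mb where "Mb = (1 + 1 / \<beta>) / 2 + 1"
  have ipU': "ip (U' n) (U' n) \<le> 1" for n using E_ge'[where u="U n" and u'="U' n" and \<beta>=\<beta>] U(2)[of n] b by simp
  have ipU: "ip (U n) (U n) \<le> 1 / \<beta>" for n using ip_le_E[OF b, of "U n" "U' n"] U(2)[of n] by simp
  have bnd: "\<bar>U n x\<bar> \<le> Mb" for n x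
  proof -
    have "\<bar>U n x\<bar> \<le> (1 + ip (U n) (U n)) / 2 + sqrt (ip (U' n) (U' n))" by (rule H1_sup[OF U(1)])
    also have "\<dots> \<le> (1 + 1 / \<beta>) / 2 + 1"
      using ipU[of n] ipU'[of n] by (intro add_mono divide_right_mono) (auto simp: real_sqrt_le_1_iff)
    finally show ?thesis unfolding Mb_def .
  qed
  have hold: "\<bar>U n x - U n y\<bar> \<le> sqrt \<bar>x - y\<bar>" for n x y
  proof -
    have "\<bar>U n x - U n y\<bar> \<le> sqrt (\<bar>x - y\<bar> * ip (U' n) (U' n))" by (rule H1_holder[OF U(1)])
    also have "\<dots> \<le> sqrt (\<bar>x - y\<bar> * 1)" using ipU'[of n] by (intro real_sqrt_le_mono mult_left_mono) auto
    finally show ?thesis by simp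
  qed
  obtain k where k: "strict_mono k" and kq: "\<And>q. q \<in> \<rat> \<Longrightarrow> \<exists>l. (\<lambda>n. U (k n) q) \<longlonglongrightarrow> l"
    using function_convergent_subsequence[of "\<rat>" U Mb] countable_rat bnd by auto
  have cv: "convergent (\<lambda>n. U (k n) x)" for x
  proof -
    have "Cauchy (\<lambda>n. U (k n) x)"
    proof (rule metric_CauchyI)
      fix e :: real assume e: "e > 0"
      obtain q where q: "q \<in> \<rat>" "x < q" "q < x + (e/3)\<^sup>2"
        using Rats_dense_in_real[of x "x + (e/3)\<^sup>2"] e by auto
      have "sqrt \<bar>x - q\<bar> < sqrt ((e/3)\<^sup>2)" using q by (intro real_sqrt_less_mono) auto
      then have sq: "sqrt \<bar>x - q\<bar> < e / 3" using e by simp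
      obtain l where "(\<lambda>n. U (k n) q) \<longlonglongrightarrow> l" using kq[OF q(1)] by blast
      then have "Cauchy (\<lambda>n. U (k n) q)" by (rule LIMSEQ_imp_Cauchy)
      then obtain N where N: "\<And>m n. m \<ge> N \<Longrightarrow> n \<ge> N \<Longrightarrow> dist (U (k m) q) (U (k n) q) < e / 3"
        using e unfolding Cauchy_def by (meson divide_pos_pos zero_less_numeral)
      show "\<exists>N. \<forall>m\<ge>N. \<forall>n\<ge>N. dist (U (k m) x) (U (k n) x) < e"
      proof (intro exI allI impI)
        fix m n assume m: "m \<ge> N" and n: "n \<ge> N"
        have a: "\<bar>U (k m) x - U (k m) q\<bar> < e / 3" using hold[of "k m" x q] sq by linarith
        have c: "\<bar>U (k n) x - U (k n) q\<bar> < e / 3" using hold[of "k n" x q] sq by linarith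
        have bb: "\<bar>U (k m) q - U (k n) q\<bar> < e / 3" using N[OF m n] by (simp add: dist_real_def)
        show "dist (U (k m) x) (U (k n) x) < e" unfolding dist_real_def using a bb c by linarith
      qed
    qed
    then show ?thesis by (simp add: Cauchy_convergent_iff)
  qed
  define u where "u x = lim (\<lambda>n. U (k n) x)" for x
  have "\<forall>x. (\<lambda>n. U (k n) x) \<longlonglongrightarrow> u x" unfolding u_def using cv by (simp add: convergent_LIMSEQ_iff)
  with k show ?thesis by blast
qed

end

lemma aux_lin:
  fixes x1 x2 x3 x4 x5 x6 x7 x8 :: real
  assumes "x1 + x2 = 2 * x3 + 2 * x4" "x5 + x6 = 2 * x7 + 2 * x8" "x5 \<le> x1"
  shows "x2 - x6 \<le> 2 * (x3 - x7) + 2 * (x4 - x8)"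
proof -
  have "x2 = 2 * x3 + 2 * x4 - x1" using assms(1) by simp
  moreover have "x6 = 2 * x7 + 2 * x8 - x5" using assms(2) by simp
  ultimately show ?thesis using assms(3) by simp
qed

context pot
begin

lemma unit_bnd:
  assumes b: "\<beta> > 0" and u: "H1 u u'" and E1: "E \<beta> u u' = 1"
  shows "ip u' u' \<le> 1" "ip u u \<le> 1 / \<beta>" "\<bar>u x\<bar> \<le> (1 + 1 / \<beta>) / 2 + 1"
proof -
  show i1: "ip u' u' \<le> 1" using E_ge'[where u=u and u'=u' and \<beta>=\<beta>] E1 b by simp
  show i2: "ip u u \<le> 1 / \<beta>" using ip_le_E[OF b, of u u'] E1 by simp
  have "\<bar>u x\<bar> \<le> (1 + ip u u) / 2 + sqrt (ip u' u')" by (rule H1_sup[OF u])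
  also have "\<dots> \<le> (1 + 1 / \<beta>) / 2 + 1"
    using i1 i2 by (intro add_mono divide_right_mono) (auto simp: real_sqrt_le_1_iff)
  finally show "\<bar>u x\<bar> \<le> (1 + 1 / \<beta>) / 2 + 1" .
qed

lemma par_bound:
  assumes "H1 f f'" "H1 g g'"
    and nn: "m * E \<beta> (\<lambda>x. f x + g x) (\<lambda>x. f' x + g' x) \<le> QB (\<lambda>x. f x + g x) (\<lambda>x. f x + g x)"
  shows "QB (\<lambda>x. f x - g x) (\<lambda>x. f x - g x) - m * E \<beta> (\<lambda>x. f x - g x) (\<lambda>x. f' x - g' x)
     \<le> 2 * (QB f f - m * E \<beta> f f') + 2 * (QB g g - m * E \<beta> g g')"
proof -
  have q: "QB (\<lambda>x. f x + g x) (\<lambda>x. f x + g x) + QB (\<lambda>x. f x - g x) (\<lambda>x. f x - g x) = 2 * QB f f + 2 * QB g g"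
    by (rule QB_par[OF H1_L2(1)[OF assms(1)] H1_L2(1)[OF assms(2)]])
  have e: "E \<beta> (\<lambda>x. f x + g x) (\<lambda>x. f' x + g' x) + E \<beta> (\<lambda>x. f x - g x) (\<lambda>x. f' x - g' x) = 2 * E \<beta> f f' + 2 * E \<beta> g g'"
    by (rule E_par[OF assms(1,2)])
  have "m * (E \<beta> (\<lambda>x. f x + g x) (\<lambda>x. f' x + g' x) + E \<beta> (\<lambda>x. f x - g x) (\<lambda>x. f' x - g' x)) = m * (2 * E \<beta> f f' + 2 * E \<beta> g g')"
    using e by simp
  then have e': "m * E \<beta> (\<lambda>x. f x + g x) (\<lambda>x. f' x + g' x) + m * E \<beta> (\<lambda>x. f x - g x) (\<lambda>x. f' x - g' x) = 2 * (m * E \<beta> f f') + 2 * (m * E \<beta> g g')"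
    by (simp add: algebra_simps)
  show ?thesis by (rule aux_lin[OF q e' nn])
qed

lemma decay_ineq:
  assumes b: "\<beta> > 0" and m0: "m < 0" and f: "H1 f f'"
    and r: "AE x in lborel. \<bar>x\<bar> > r \<longrightarrow> \<bar>V x\<bar> < - m * \<beta> / 2"
  shows "E \<beta> f f' \<le> (2 / (- m)) * ((QB f f - m * E \<beta> f f') + C * (\<integral>x. indicator {-r..r} x * (f x)\<^sup>2 \<partial>lborel))"
proof -
  define Lf where "Lf = (\<integral>x. indicator {-r..r} x * (f x)\<^sup>2 \<partial>lborel)"
  have e0: "- m * \<beta> / 2 \<ge> 0" using mult_neg_pos[OF m0 b] by simp
  have q: "QB f f \<ge> - C * Lf - (- m * \<beta> / 2) * ip f f"
    unfolding Lf_def by (rule QB_decay[OF H1_L2(1)[OF f] e0 r])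
  have "(- m * \<beta> / 2) * ip f f \<le> (- m * \<beta> / 2) * (E \<beta> f f' / \<beta>)"
    using ip_le_E[OF b, of f f'] e0 by (intro mult_left_mono) auto
  also have "\<dots> = (- m / 2) * E \<beta> f f'" using b by simp
  finally have "(- m / 2) * E \<beta> f f' \<le> (QB f f - m * E \<beta> f f') + C * Lf" using q by (simp add: algebra_simps)
  then have "(2 / (- m)) * ((- m / 2) * E \<beta> f f') \<le> (2 / (- m)) * ((QB f f - m * E \<beta> f f') + C * Lf)"
    using m0 by (intro mult_left_mono) auto
  then show ?thesis using m0 unfolding Lf_def by simp
qed

lemma E_cauchy:
  fixes v v' :: "nat \<Rightarrow> real \<Rightarrow> real" and u :: "real \<Rightarrow> real"
  assumes b: "\<beta> > 0" and m0: "m < 0"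
    and Bnn: "\<And>f f'. H1 f f' \<Longrightarrow> m * E \<beta> f f' \<le> QB f f"
    and vH: "\<And>n. H1 (v n) (v' n)" and vE: "\<And>n. E \<beta> (v n) (v' n) = 1"
    and vQ: "\<And>n. QB (v n) (v n) < m + 1 / Suc n"
    and vlim: "\<And>x. (\<lambda>n. v n x) \<longlonglongrightarrow> u x"
    and decay: "\<And>e. e > 0 \<Longrightarrow> \<exists>r. AE x in lborel. \<bar>x\<bar> > r \<longrightarrow> \<bar>V x\<bar> < e"
  shows "\<forall>\<epsilon>>0. \<exists>N. \<forall>a\<ge>N. \<forall>c\<ge>N. E \<beta> (\<lambda>x. v a x - v c x) (\<lambda>x. v' a x - v' c x) < \<epsilon>"
proof (intro allI impI)
  fix \<epsilon> :: real assume eps: "\<epsilon> > 0"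
  define Mb where "Mb = (1 + 1 / \<beta>) / 2 + 1"
  have vb: "\<bar>v n x\<bar> \<le> Mb" for n x unfolding Mb_def by (rule unit_bnd(3)[OF b vH vE])
  have ub: "\<bar>u x\<bar> \<le> Mb" for x
    by (rule LIMSEQ_le_const2[OF tendsto_rabs[OF vlim[of x]]]) (use vb in auto)
  have vm[measurable]: "v n \<in> borel_measurable lborel" for n using H1_L2(1)[OF vH] by (simp add: L2_def)
  have um[measurable]: "u \<in> borel_measurable lborel"
    by (rule borel_measurable_LIMSEQ_real[OF vlim]) simp
  have "- m * \<beta> / 2 > 0" using mult_neg_pos[OF m0 b] by simp
  from decay[OF this] obtain r where r: "AE x in lborel. \<bar>x\<bar> > r \<longrightarrow> \<bar>V x\<bar> < - m * \<beta> / 2" by blast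
  define I where "I = (indicator {-r..r} :: real \<Rightarrow> real)"
  have intI: "integrable lborel I" unfolding I_def
    using emeasure_bounded_finite[OF bounded_closed_interval[of "-r" r]] by (simp add: integrable_indicator_iff)
  define s where "s n x = I x * (v n x - u x)\<^sup>2" for n x
  have sm: "s n \<in> borel_measurable lborel" for n unfolding s_def I_def by measurable
  have A1: "integrable lborel (\<lambda>x. I x * (2 * Mb)\<^sup>2)" using intI by simp
  have A2: "AE x in lborel. (\<lambda>n. s n x) \<longlonglongrightarrow> 0"
  proof (rule AE_I2)
    fix x
    have "(\<lambda>n. I x * (v n x - u x)\<^sup>2) \<longlonglongrightarrow> I x * (u x - u x)\<^sup>2"
      by (intro tendsto_intros vlim)
    then show "(\<lambda>n. s n x) \<longlonglongrightarrow> 0" unfolding s_def by simp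
  qed
  have A3: "AE x in lborel. norm (s n x) \<le> I x * (2 * Mb)\<^sup>2" for n
  proof (rule AE_I2)
    fix x
    have "\<bar>v n x - u x\<bar> \<le> 2 * Mb" using vb[of n x] ub[of x] by linarith
    then have "\<bar>v n x - u x\<bar>\<^sup>2 \<le> (2 * Mb)\<^sup>2" by (rule power_mono) simp
    then have "(v n x - u x)\<^sup>2 \<le> (2 * Mb)\<^sup>2" by simp
    moreover have "0 \<le> I x" unfolding I_def by (auto simp: indicator_def)
    ultimately show "norm (s n x) \<le> I x * (2 * Mb)\<^sup>2" unfolding s_def
      by (simp add: mult_left_mono)
  qed
  have slim: "(\<lambda>n. \<integral>x. s n x \<partial>lborel) \<longlonglongrightarrow> (\<integral>x. 0 \<partial>lborel)"
    using integral_dominated_convergence[OF _ sm A1 A2 A3] by simp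
  then have slim0: "(\<lambda>n. \<integral>x. s n x \<partial>lborel) \<longlonglongrightarrow> 0" by simp
  have sint: "integrable lborel (s n)" for n
    using integrable_dominated_convergence2[OF _ sm A1 A2 A3] by simp
  have Lint: "integrable lborel (\<lambda>x. I x * (v a x - v c x)\<^sup>2)" for a c
  proof (rule Bochner_Integration.integrable_bound[OF A1])
    show "(\<lambda>x. I x * (v a x - v c x)\<^sup>2) \<in> borel_measurable lborel" unfolding I_def by measurable
    show "AE x in lborel. norm (I x * (v a x - v c x)\<^sup>2) \<le> norm (I x * (2 * Mb)\<^sup>2)"
    proof (rule AE_I2)
      fix x
      have "\<bar>v a x - v c x\<bar> \<le> 2 * Mb" using vb[of a x] vb[of c x] by linarith
      then have "\<bar>v a x - v c x\<bar>\<^sup>2 \<le> (2 * Mb)\<^sup>2" by (rule power_mono) simp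
      then have "(v a x - v c x)\<^sup>2 \<le> (2 * Mb)\<^sup>2" by simp
      moreover have "0 \<le> I x" unfolding I_def by (auto simp: indicator_def)
      ultimately show "norm (I x * (v a x - v c x)\<^sup>2) \<le> norm (I x * (2 * Mb)\<^sup>2)"
        by (simp add: mult_left_mono)
    qed
  qed
  have Lbound: "(\<integral>x. I x * (v a x - v c x)\<^sup>2 \<partial>lborel) \<le> 2 * (\<integral>x. s a x \<partial>lborel) + 2 * (\<integral>x. s c x \<partial>lborel)" for a c
  proof -
    have "(\<integral>x. I x * (v a x - v c x)\<^sup>2 \<partial>lborel) \<le> (\<integral>x. 2 * s a x + 2 * s c x \<partial>lborel)"
    proof (rule integral_mono[OF Lint])
      show "integrable lborel (\<lambda>x. 2 * s a x + 2 * s c x)" using sint[of a] sint[of c] by simp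
      fix x
      have "0 \<le> ((v a x - u x) + (v c x - u x))\<^sup>2" by simp
      then have "(v a x - v c x)\<^sup>2 \<le> 2 * (v a x - u x)\<^sup>2 + 2 * (v c x - u x)\<^sup>2"
        by (simp add: power2_eq_square algebra_simps)
      moreover have "0 \<le> I x" unfolding I_def by (auto simp: indicator_def)
      ultimately have "I x * (v a x - v c x)\<^sup>2 \<le> I x * (2 * (v a x - u x)\<^sup>2 + 2 * (v c x - u x)\<^sup>2)"
        by (rule mult_left_mono)
      then show "I x * (v a x - v c x)\<^sup>2 \<le> 2 * s a x + 2 * s c x" unfolding s_def by (simp add: algebra_simps)
    qed
    also have "\<dots> = 2 * (\<integral>x. s a x \<partial>lborel) + 2 * (\<integral>x. s c x \<partial>lborel)" using sint[of a] sint[of c] by simp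
    finally show ?thesis .
  qed
  define \<delta> where "\<delta> = \<epsilon> * (- m) / (16 * (1 + C))"
  have d0: "\<delta> > 0" unfolding \<delta>_def by (intro divide_pos_pos mult_pos_pos) (use eps m0 C0 in auto)
  have ev1: "eventually (\<lambda>n. (\<integral>x. s n x \<partial>lborel) < \<delta>) sequentially"
    using order_tendstoD(2)[OF slim0 d0] .
  have "(\<lambda>n. 1 / real (Suc n)) \<longlonglongrightarrow> 0" by (rule LIMSEQ_Suc[OF lim_inverse_n'])
  then have ev2: "eventually (\<lambda>n. 1 / real (Suc n) < \<delta>) sequentially"
    using order_tendstoD(2)[OF _ d0] by blast
  obtain N where N: "\<And>n. n \<ge> N \<Longrightarrow> (\<integral>x. s n x \<partial>lborel) < \<delta> \<and> 1 / real (Suc n) < \<delta>"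
    using eventually_conj[OF ev1 ev2] unfolding eventually_sequentially by blast
  show "\<exists>N. \<forall>a\<ge>N. \<forall>c\<ge>N. E \<beta> (\<lambda>x. v a x - v c x) (\<lambda>x. v' a x - v' c x) < \<epsilon>"
  proof (intro exI allI impI)
    fix a c assume a: "a \<ge> N" and c: "c \<ge> N"
    have Hd: "H1 (\<lambda>x. v a x - v c x) (\<lambda>x. v' a x - v' c x)" by (rule H1_diff[OF vH vH])
    have nn: "m * E \<beta> (\<lambda>x. v a x + v c x) (\<lambda>x. v' a x + v' c x) \<le> QB (\<lambda>x. v a x + v c x) (\<lambda>x. v a x + v c x)"
      by (rule Bnn[OF H1_add[OF vH vH]])
    have Bd: "QB (\<lambda>x. v a x - v c x) (\<lambda>x. v a x - v c x) - m * E \<beta> (\<lambda>x. v a x - v c x) (\<lambda>x. v' a x - v' c x)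
        \<le> 2 * (QB (v a) (v a) - m * E \<beta> (v a) (v' a)) + 2 * (QB (v c) (v c) - m * E \<beta> (v c) (v' c))"
      by (rule par_bound[OF vH vH nn])
    also have "\<dots> < 4 * \<delta>" using vQ[of a] vQ[of c] vE[of a] vE[of c] N[OF a] N[OF c] by simp
    finally have Bd': "QB (\<lambda>x. v a x - v c x) (\<lambda>x. v a x - v c x) - m * E \<beta> (\<lambda>x. v a x - v c x) (\<lambda>x. v' a x - v' c x) < 4 * \<delta>" .
    have Ld: "(\<integral>x. indicator {-r..r} x * (v a x - v c x)\<^sup>2 \<partial>lborel) < 4 * \<delta>"
      using Lbound[of a c] N[OF a] N[OF c] unfolding I_def by simp
    have "E \<beta> (\<lambda>x. v a x - v c x) (\<lambda>x. v' a x - v' c x)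
       \<le> (2 / (- m)) * ((QB (\<lambda>x. v a x - v c x) (\<lambda>x. v a x - v c x) - m * E \<beta> (\<lambda>x. v a x - v c x) (\<lambda>x. v' a x - v' c x))
            + C * (\<integral>x. indicator {-r..r} x * (v a x - v c x)\<^sup>2 \<partial>lborel))"
      by (rule decay_ineq[OF b m0 Hd r])
    also have "\<dots> \<le> (2 / (- m)) * (4 * \<delta> + C * (4 * \<delta>))"
      using Bd' Ld C0 m0 by (intro mult_left_mono add_mono mult_left_mono) auto
    also have "4 * \<delta> + C * (4 * \<delta>) = \<epsilon> * (- m) / 4"
    proof -
      have "4 * \<delta> + C * (4 * \<delta>) = 4 * (1 + C) * \<delta>" by (simp add: algebra_simps)
      also have "\<dots> = \<epsilon> * (- m) / 4" unfolding \<delta>_def using C0 by (simp add: field_simps)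
      finally show ?thesis .
    qed
    also have "(2 / (- m)) * (\<epsilon> * (- m) / 4) = \<epsilon> / 2" using m0 by (simp add: field_simps)
    also have "\<dots> < \<epsilon>" using eps by simp
    finally show "E \<beta> (\<lambda>x. v a x - v c x) (\<lambda>x. v' a x - v' c x) < \<epsilon>" .
  qed
qed

end

context pot
begin

lemma exists_min:
  assumes b: "\<beta> > 0"
    and decay: "\<And>e. e > 0 \<Longrightarrow> \<exists>r. AE x in lborel. \<bar>x\<bar> > r \<longrightarrow> \<bar>V x\<bar> < e"
    and w: "H1 w w'" "E \<beta> w w' > 0" "QB w w < 0"
  shows "Inf (Ray \<beta>) < 0 \<and> (\<exists>u u'. H1 u u' \<and> E \<beta> u u' > 0 \<and> QB u u = Inf (Ray \<beta>) * E \<beta> u u')"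
proof -
  define m where "m = Inf (Ray \<beta>)"
  have "QB w w / E \<beta> w w' \<in> Ray \<beta>" unfolding Ray_def using w by blast
  then have "m \<le> QB w w / E \<beta> w w'" unfolding m_def by (rule cInf_lower[OF _ Ray_bdd[OF b]])
  moreover have "QB w w / E \<beta> w w' < 0" using w by (simp add: divide_neg_pos)
  ultimately have m0: "m < 0" by linarith
  have Bnn: "\<And>f f'. H1 f f' \<Longrightarrow> m * E \<beta> f f' \<le> QB f f" unfolding m_def by (rule B_nonneg[OF b])
  obtain U U' where U: "\<And>n. H1 (U n) (U' n)" "\<And>n. E \<beta> (U n) (U' n) = 1"
      "\<And>n. QB (U n) (U n) < m + 1 / Suc n"
    using min_seq[OF b w(1,2)] unfolding m_def by blast
  obtain k u where k: "strict_mono k" and ulim: "\<And>x. (\<lambda>n. U (k n) x) \<longlonglongrightarrow> u x"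
    using compact_sub[where U=U and U'=U', OF b U(1) U(2)] by blast
  define v where "v n = U (k n)" for n
  define v' where "v' n = U' (k n)" for n
  have vH: "H1 (v n) (v' n)" for n unfolding v_def v'_def by (rule U(1))
  have vE: "E \<beta> (v n) (v' n) = 1" for n unfolding v_def v'_def by (rule U(2))
  have vQ: "QB (v n) (v n) < m + 1 / Suc n" for n
  proof -
    have "real (Suc n) \<le> real (Suc (k n))" using seq_suble[OF k, of n] by simp
    then have "1 / real (Suc (k n)) \<le> 1 / real (Suc n)" by (intro divide_left_mono) auto
    then show ?thesis using U(3)[of "k n"] unfolding v_def by linarith
  qed
  have vlim: "(\<lambda>n. v n x) \<longlonglongrightarrow> u x" for x unfolding v_def by (rule ulim)
  have Ec: "\<forall>\<epsilon>>0. \<exists>N. \<forall>a\<ge>N. \<forall>c\<ge>N. E \<beta> (\<lambda>x. v a x - v c x) (\<lambda>x. v' a x - v' c x) < \<epsilon>"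
    by (rule E_cauchy[where v=v and v'=v' and u=u, OF b m0 Bnn vH vE vQ vlim decay])
  have vm[measurable]: "v n \<in> borel_measurable lborel" for n using H1_L2(1)[OF vH] by (simp add: L2_def)
  have um[measurable]: "u \<in> borel_measurable lborel"
    by (rule borel_measurable_LIMSEQ_real[OF vlim]) simp
  have cau': "\<exists>N. \<forall>n\<ge>N. \<forall>c\<ge>N. ip (\<lambda>x. v' n x - v' c x) (\<lambda>x. v' n x - v' c x) < e" if e: "e > 0" for e
  proof -
    obtain N where N: "\<And>a c. a \<ge> N \<Longrightarrow> c \<ge> N \<Longrightarrow> E \<beta> (\<lambda>x. v a x - v c x) (\<lambda>x. v' a x - v' c x) < e"
      using Ec e by blast
    show ?thesis
    proof (intro exI allI impI)
      fix a c assume "a \<ge> N" "c \<ge> N"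
      then show "ip (\<lambda>x. v' a x - v' c x) (\<lambda>x. v' a x - v' c x) < e"
        using N[of a c] E_ge'[where \<beta>=\<beta> and u="\<lambda>x. v a x - v c x" and u'="\<lambda>x. v' a x - v' c x"] b by simp
    qed
  qed
  obtain g where gL2: "L2 g" and glim: "(\<lambda>n. ip (\<lambda>x. v' n x - g x) (\<lambda>x. v' n x - g x)) \<longlonglongrightarrow> 0"
    using L2_complete[of v', OF H1_L2(2)[OF vH] cau'] by blast
  have ukey: "\<exists>N. \<forall>n\<ge>N. integrable lborel (\<lambda>x. (v n x - u x)\<^sup>2) \<and> (\<integral>x. (v n x - u x)\<^sup>2 \<partial>lborel) \<le> e"
    if e: "e > 0" for e
  proof -
    obtain N where N: "\<And>a c. a \<ge> N \<Longrightarrow> c \<ge> N \<Longrightarrow> E \<beta> (\<lambda>x. v a x - v c x) (\<lambda>x. v' a x - v' c x) < e * \<beta>"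
      using Ec e b by (meson mult_pos_pos)
    show ?thesis
    proof (intro exI allI impI)
      fix n assume n: "n \<ge> N"
      show "integrable lborel (\<lambda>x. (v n x - u x)\<^sup>2) \<and> (\<integral>x. (v n x - u x)\<^sup>2 \<partial>lborel) \<le> e"
      proof (rule fatou_L2[where f=v and N=N])
        fix c assume c: "N \<le> c"
        have L: "L2 (\<lambda>x. v n x - v c x)" by (intro L2_diff H1_L2(1)[OF vH])
        have "ip (\<lambda>x. v n x - v c x) (\<lambda>x. v n x - v c x) \<le> E \<beta> (\<lambda>x. v n x - v c x) (\<lambda>x. v' n x - v' c x) / \<beta>"
          by (rule ip_le_E[OF b])
        also have "\<dots> < e" using N[OF n c] b by (simp add: field_simps)
        finally show "integrable lborel (\<lambda>x. (v n x - v c x)\<^sup>2) \<and> (\<integral>x. (v n x - v c x)\<^sup>2 \<partial>lborel) \<le> e"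
          using L by (simp add: L2_def ip_sq)
      qed (auto simp: vlim)
    qed
  qed
  obtain N1 where N1: "\<And>n. n \<ge> N1 \<Longrightarrow> integrable lborel (\<lambda>x. (v n x - u x)\<^sup>2)"
    using ukey[of 1] by auto
  have "L2 (\<lambda>x. v N1 x - u x)" using N1[of N1] by (simp add: L2_def)
  from L2_diff[OF H1_L2(1)[OF vH[of N1]] this] have uL2: "L2 u" by simp
  have ulim2: "(\<lambda>n. ip (\<lambda>x. v n x - u x) (\<lambda>x. v n x - u x)) \<longlonglongrightarrow> 0"
  proof (rule metric_LIMSEQ_I)
    fix r :: real assume r: "r > 0"
    obtain K where K: "\<And>n. n \<ge> K \<Longrightarrow> (\<integral>x. (v n x - u x)\<^sup>2 \<partial>lborel) \<le> r / 2"
      using ukey[of "r/2"] r by auto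
    show "\<exists>no. \<forall>n\<ge>no. dist (ip (\<lambda>x. v n x - u x) (\<lambda>x. v n x - u x)) 0 < r"
    proof (intro exI allI impI)
      fix n assume "n \<ge> K"
      then have "ip (\<lambda>x. v n x - u x) (\<lambda>x. v n x - u x) \<le> r / 2" using K by (simp add: ip_sq)
      moreover have "0 \<le> ip (\<lambda>x. v n x - u x) (\<lambda>x. v n x - u x)" by (rule ip_nonneg)
      ultimately show "dist (ip (\<lambda>x. v n x - u x) (\<lambda>x. v n x - u x)) 0 < r" using r by simp
    qed
  qed
  have fu: "u x = u 0 + (LBINT t=0..x. g t)" for x
  proof -
    have dL2: "L2 (\<lambda>t. v' n t - g t)" for n by (intro L2_diff gL2 H1_L2(2)[OF vH])
    have bnd: "norm (LBINT t=0..x. v' n t - g t) \<le> sqrt (\<bar>x - 0\<bar> * ip (\<lambda>t. v' n t - g t) (\<lambda>t. v' n t - g t))" for n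
      using CS_interval[OF dL2[of n], of 0 x] by (simp add: zero_ereal_def)
    have "(\<lambda>n. \<bar>x - 0\<bar> * ip (\<lambda>t. v' n t - g t) (\<lambda>t. v' n t - g t)) \<longlonglongrightarrow> \<bar>x - 0\<bar> * 0"
      by (rule tendsto_mult_left[OF glim])
    then have "(\<lambda>n. sqrt (\<bar>x - 0\<bar> * ip (\<lambda>t. v' n t - g t) (\<lambda>t. v' n t - g t))) \<longlonglongrightarrow> sqrt (\<bar>x - 0\<bar> * 0)"
      by (rule tendsto_real_sqrt)
    then have sq0: "(\<lambda>n. sqrt (\<bar>x - 0\<bar> * ip (\<lambda>t. v' n t - g t) (\<lambda>t. v' n t - g t))) \<longlonglongrightarrow> 0"
      by simp
    have "(\<lambda>n. LBINT t=0..x. v' n t - g t) \<longlonglongrightarrow> 0"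
      by (rule Lim_null_comparison[OF always_eventually sq0]) (use bnd in blast)
    moreover have "(LBINT t=0..x. v' n t - g t) = (LBINT t=0..x. v' n t) - (LBINT t=0..x. g t)" for n
      using L2_interval_integrable[OF H1_L2(2)[OF vH[of n]], of 0 x] L2_interval_integrable[OF gL2, of 0 x]
      by (intro interval_lebesgue_integral_diff(2)) (auto simp: zero_ereal_def)
    ultimately have "(\<lambda>n. (LBINT t=0..x. v' n t) - (LBINT t=0..x. g t)) \<longlonglongrightarrow> 0" by simp
    then have "(\<lambda>n. ((LBINT t=0..x. v' n t) - (LBINT t=0..x. g t)) + (LBINT t=0..x. g t)) \<longlonglongrightarrow> 0 + (LBINT t=0..x. g t)"
      by (intro tendsto_add tendsto_const)
    then have I: "(\<lambda>n. LBINT t=0..x. v' n t) \<longlonglongrightarrow> (LBINT t=0..x. g t)" by simp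
    have "(\<lambda>n. v n 0 + (LBINT t=0..x. v' n t)) \<longlonglongrightarrow> u 0 + (LBINT t=0..x. g t)"
      by (intro tendsto_add vlim I)
    moreover have "v n x = v n 0 + (LBINT t=0..x. v' n t)" for n using vH[of n] unfolding H1_def by blast
    ultimately have "(\<lambda>n. v n x) \<longlonglongrightarrow> u 0 + (LBINT t=0..x. g t)" by simp
    then show ?thesis using vlim[of x] LIMSEQ_unique by blast
  qed
  have uH: "H1 u g" by (rule H1_intro[OF uL2 gL2 fu])
  define Ew where "Ew n = E \<beta> (\<lambda>x. v n x - u x) (\<lambda>x. v' n x - g x)" for n
  have Ew_lim: "Ew \<longlonglongrightarrow> 0"
  proof -
    have "(\<lambda>n. ip (\<lambda>x. v' n x - g x) (\<lambda>x. v' n x - g x) + \<beta> * ip (\<lambda>x. v n x - u x) (\<lambda>x. v n x - u x)) \<longlonglongrightarrow> 0 + \<beta> * 0"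
      by (intro tendsto_intros glim ulim2)
    then show ?thesis unfolding Ew_def E_def by simp
  qed
  have wnH: "H1 (\<lambda>x. v n x - u x) (\<lambda>x. v' n x - g x)" for n by (rule H1_diff[OF vH uH])
  define K where "K = C / \<beta> - m"
  have "C / \<beta> \<ge> 0" using C0 b by (intro divide_nonneg_pos) auto
  then have K0: "K \<ge> 0" unfolding K_def using m0 by linarith
  have Bu: "QB u u - m * E \<beta> u g \<le> 2 / Suc n + 2 * K * Ew n" for n
  proof -
    have nn: "m * E \<beta> (\<lambda>x. v n x + (v n x - u x)) (\<lambda>x. v' n x + (v' n x - g x))
        \<le> QB (\<lambda>x. v n x + (v n x - u x)) (\<lambda>x. v n x + (v n x - u x))"
      by (rule Bnn[OF H1_add[OF vH wnH]])
    have pb: "QB (\<lambda>x. v n x - (v n x - u x)) (\<lambda>x. v n x - (v n x - u x))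
        - m * E \<beta> (\<lambda>x. v n x - (v n x - u x)) (\<lambda>x. v' n x - (v' n x - g x))
      \<le> 2 * (QB (v n) (v n) - m * E \<beta> (v n) (v' n))
        + 2 * (QB (\<lambda>x. v n x - u x) (\<lambda>x. v n x - u x) - m * E \<beta> (\<lambda>x. v n x - u x) (\<lambda>x. v' n x - g x))"
      by (rule par_bound[OF vH wnH nn])
    have e1: "(\<lambda>x. v n x - (v n x - u x)) = u" by auto
    have e2: "(\<lambda>x. v' n x - (v' n x - g x)) = g" by auto
    have t1: "QB (v n) (v n) - m * E \<beta> (v n) (v' n) \<le> 1 / Suc n" using vQ[of n] vE[of n] by simp
    have "QB (\<lambda>x. v n x - u x) (\<lambda>x. v n x - u x) \<le> C * ip (\<lambda>x. v n x - u x) (\<lambda>x. v n x - u x)"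
      using QB_bound[OF H1_L2(1)[OF wnH[of n]]] by simp
    also have "\<dots> \<le> C * (Ew n / \<beta>)" unfolding Ew_def using ip_le_E[OF b] C0 by (intro mult_left_mono) auto
    finally have t2a: "QB (\<lambda>x. v n x - u x) (\<lambda>x. v n x - u x) \<le> (C / \<beta>) * Ew n" by simp
    have t2: "QB (\<lambda>x. v n x - u x) (\<lambda>x. v n x - u x) - m * E \<beta> (\<lambda>x. v n x - u x) (\<lambda>x. v' n x - g x) \<le> K * Ew n"
      using t2a unfolding K_def Ew_def by (simp add: algebra_simps)
    show ?thesis using pb t1 t2 unfolding e1 e2 by (simp add: algebra_simps)
  qed
  have h: "(\<lambda>n. 1 / real (Suc n)) \<longlonglongrightarrow> 0" by (rule LIMSEQ_Suc[OF lim_inverse_n'])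
  have "(\<lambda>n. 2 * (1 / real (Suc n)) + (2 * K) * Ew n) \<longlonglongrightarrow> 2 * 0 + (2 * K) * 0"
    by (intro tendsto_add tendsto_mult_left h Ew_lim)
  then have X: "(\<lambda>n. 2 * (1 / real (Suc n)) + (2 * K) * Ew n) \<longlonglongrightarrow> 0" by simp
  have Bu': "QB u u - m * E \<beta> u g \<le> 2 * (1 / real (Suc n)) + (2 * K) * Ew n" for n
    using Bu[of n] by simp
  have Bu0: "QB u u - m * E \<beta> u g \<le> 0"
    by (rule LIMSEQ_le_const[OF X]) (use Bu' in blast)
  have Eu: "1 / 2 - Ew n \<le> E \<beta> u g" for n
  proof -
    have wH': "H1 (\<lambda>x. v n x - u x) (\<lambda>x. v' n x - g x)" by (rule wnH)
    have ep: "E \<beta> (\<lambda>x. u x + (v n x - u x)) (\<lambda>x. g x + (v' n x - g x)) + E \<beta> (\<lambda>x. u x - (v n x - u x)) (\<lambda>x. g x - (v' n x - g x))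
        = 2 * E \<beta> u g + 2 * E \<beta> (\<lambda>x. v n x - u x) (\<lambda>x. v' n x - g x)"
      by (rule E_par[OF uH wH'])
    have e1: "(\<lambda>x. u x + (v n x - u x)) = v n" by auto
    have e2: "(\<lambda>x. g x + (v' n x - g x)) = v' n" by auto
    have "E \<beta> (\<lambda>x. u x - (v n x - u x)) (\<lambda>x. g x - (v' n x - g x)) \<ge> 0" using b by (intro E_nonneg) simp
    then show ?thesis using ep vE[of n] unfolding e1 e2 Ew_def by simp
  qed
  have "(\<lambda>n. 1 / 2 - Ew n) \<longlonglongrightarrow> 1 / 2 - 0" by (intro tendsto_intros Ew_lim)
  then have Eu0: "1 / 2 \<le> E \<beta> u g"
    by (intro LIMSEQ_le_const2[where a="E \<beta> u g"]) (use Eu in auto)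
  have Q: "QB u u = m * E \<beta> u g" using Bu0 Bnn[OF uH] by simp
  have Epos: "E \<beta> u g > 0" using Eu0 by linarith
  show ?thesis unfolding m_def[symmetric] using m0 uH Epos Q by blast
qed

end

context pot
begin

lemma EL:
  assumes uH: "H1 u u'" and Q: "QB u u = m * E \<beta> u u'"
    and Bnn: "\<And>f f'. H1 f f' \<Longrightarrow> m * E \<beta> f f' \<le> QB f f"
    and pH: "H1 p p'"
  shows "QB u p = m * EB \<beta> u u' p p'"
proof -
  have "2 * t * (QB u p - m * EB \<beta> u u' p p') + t\<^sup>2 * (QB p p - m * E \<beta> p p') \<ge> 0" for t
  proof -
    have H: "H1 (\<lambda>x. u x + t * p x) (\<lambda>x. u' x + t * p' x)"
      using H1_lin[OF uH pH, of 1 t] by simp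
    have "m * E \<beta> (\<lambda>x. u x + t * p x) (\<lambda>x. u' x + t * p' x) \<le> QB (\<lambda>x. u x + t * p x) (\<lambda>x. u x + t * p x)"
      by (rule Bnn[OF H])
    moreover have "QB (\<lambda>x. u x + t * p x) (\<lambda>x. u x + t * p x) = QB u u + 2 * t * QB u p + t\<^sup>2 * QB p p"
      by (rule QB_expand[OF H1_L2(1)[OF uH] H1_L2(1)[OF pH]])
    moreover have "E \<beta> (\<lambda>x. u x + t * p x) (\<lambda>x. u' x + t * p' x) = E \<beta> u u' + 2 * t * EB \<beta> u u' p p' + t\<^sup>2 * E \<beta> p p'"
      by (rule E_expand[OF uH pH])
    ultimately have "m * (E \<beta> u u' + 2 * t * EB \<beta> u u' p p' + t\<^sup>2 * E \<beta> p p') \<le> QB u u + 2 * t * QB u p + t\<^sup>2 * QB p p"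
      by simp
    then show ?thesis using Q by (simp add: algebra_simps)
  qed
  then have "QB u p - m * EB \<beta> u u' p p' = 0" by (rule quad_zero)
  then show ?thesis by simp
qed

lemma eigen:
  assumes b: "\<beta> > 0" and uH: "H1 u u'" and Epos: "E \<beta> u u' > 0" and m0: "m < 0"
    and Q: "QB u u = m * E \<beta> u u'"
    and Bnn: "\<And>f f'. H1 f f' \<Longrightarrow> m * E \<beta> f f' \<le> QB f f"
  shows "K_eigenvalue V \<beta> m"
  unfolding K_eigenvalue_def
proof (intro exI conjI allI impI)
  show "H1 u u'" by (rule uH)
  have "QB u u < 0" using Q Epos m0 by (simp add: mult_neg_pos)
  moreover have "\<bar>QB u u\<bar> \<le> C * ip u u" by (rule QB_bound[OF H1_L2(1)[OF uH]])
  ultimately have "ip u u \<noteq> 0" by auto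
  then have "ip u u > 0" using ip_nonneg[of u] by linarith
  then show "(\<integral>x. (u x)\<^sup>2 \<partial>lborel) > 0" by (simp add: ip_sq)
  fix p p' assume pH: "H1 p p'"
  have "QB u p = m * EB \<beta> u u' p p'" by (rule EL[OF uH Q Bnn pH])
  then show "(\<integral>x. V x * u x * p x \<partial>lborel) = m * ((\<integral>x. u' x * p' x \<partial>lborel) + \<beta> * (\<integral>x. u x * p x \<partial>lborel))"
    unfolding QB_def EB_def ip_def .
qed

lemma eigen_ge:
  assumes b: "\<beta> > 0" and ev: "K_eigenvalue V \<beta> \<mu>"
    and Bnn: "\<And>f f'. H1 f f' \<Longrightarrow> m * E \<beta> f f' \<le> QB f f"
  shows "m \<le> \<mu>"
proof -
  obtain u u' where uH: "H1 u u'" and pos: "(\<integral>x. (u x)\<^sup>2 \<partial>lborel) > 0"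
    and eq: "\<And>p p'. H1 p p' \<Longrightarrow> (\<integral>x. V x * u x * p x \<partial>lborel)
            = \<mu> * ((\<integral>x. u' x * p' x \<partial>lborel) + \<beta> * (\<integral>x. u x * p x \<partial>lborel))"
    using ev unfolding K_eigenvalue_def by blast
  have "QB u u = \<mu> * E \<beta> u u'" using eq[OF uH] unfolding QB_def E_def ip_def .
  moreover have "E \<beta> u u' > 0"
  proof -
    have "ip u u > 0" using pos by (simp add: ip_sq)
    then have "\<beta> * ip u u > 0" using b by simp
    then show ?thesis using E_ge[of \<beta> u u'] b by linarith
  qed
  moreover have "m * E \<beta> u u' \<le> QB u u" by (rule Bnn[OF uH])
  ultimately show ?thesis by simp
qed

lemma main_beta:
  assumes b: "\<beta> > 0"
    and decay: "\<And>e. e > 0 \<Longrightarrow> \<exists>r. AE x in lborel. \<bar>x\<bar> > r \<longrightarrow> \<bar>V x\<bar> < e"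
    and w: "H1 w w'" "E \<beta> w w' > 0" "QB w w < 0"
  shows "(\<exists>\<mu><0. K_eigenvalue V \<beta> \<mu>) \<and> mu1 V \<beta> \<le> QB w w / E \<beta> w w'"
proof -
  define m where "m = Inf (Ray \<beta>)"
  obtain u u' where m0: "m < 0" and uH: "H1 u u'" and Epos: "E \<beta> u u' > 0" and Q: "QB u u = m * E \<beta> u u'"
    using exists_min[OF b decay w] unfolding m_def by blast
  have Bnn: "\<And>f f'. H1 f f' \<Longrightarrow> m * E \<beta> f f' \<le> QB f f" unfolding m_def by (rule B_nonneg[OF b])
  have ev: "K_eigenvalue V \<beta> m" by (rule eigen[OF b uH Epos m0 Q Bnn])
  have "mu1 V \<beta> = m" unfolding mu1_def
  proof (rule cInf_eq_minimum)
    show "m \<in> {\<mu>. \<mu> < 0 \<and> K_eigenvalue V \<beta> \<mu>}" using m0 ev by simp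
    show "m \<le> x" if "x \<in> {\<mu>. \<mu> < 0 \<and> K_eigenvalue V \<beta> \<mu>}" for x
      using that eigen_ge[OF b _ Bnn] by simp
  qed
  moreover have "m * E \<beta> w w' \<le> QB w w" by (rule Bnn[OF w(1)])
  then have "m \<le> QB w w / E \<beta> w w'" using w(2) by (simp add: field_simps)
  ultimately show ?thesis using m0 ev by auto
qed

end

lemma LBINT_ind:
  fixes a b p q :: real assumes ab: "a \<le> b"
  shows "(LBINT t=a..b. indicator {p<..<q} t) = max 0 (min b q - max a p)"
proof -
  have "(LBINT t=a..b. indicator {p<..<q} t) = ip (indicator {a<..<b}) (indicator {p<..<q})"
    by (rule LBINT_ip[OF ab])
  also have "\<dots> = (\<integral>x. indicator {max a p<..<min b q} x \<partial>lborel)" unfolding ip_def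
    by (rule Bochner_Integration.integral_cong) (auto simp: indicator_def)
  also have "\<dots> = max 0 (min b q - max a p)"
  proof (cases "max a p \<le> min b q")
    case True
    have m: "measure lborel {max a p<..<min b q} = min b q - max a p" by (rule measure_lborel_Ioo[OF True])
    have "(\<integral>x. indicator {max a p<..<min b q} x \<partial>lborel) = measure lborel {max a p<..<min b q}"
      by simp
    then have i: "(\<integral>x. indicator {max a p<..<min b q} x \<partial>lborel) = min b q - max a p" using m by simp
    have "0 \<le> min b q - max a p" using True by linarith
    then have M: "max 0 (min b q - max a p) = min b q - max a p" by (rule max_absorb2)
    show ?thesis using i M by linarith
  next
    case False
    then have E: "{max a p<..<min b q} = {}" by auto
    have i: "(\<integral>x. (indicator {max a p<..<min b q} x :: real) \<partial>lborel) = 0" unfolding E by simp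
    have "min b q - max a p \<le> 0" using False by linarith
    then have M: "max 0 (min b q - max a p) = 0" by (rule max_absorb1)
    show ?thesis using i M by linarith
  qed
  finally show ?thesis .
qed

definition trialW :: "real \<Rightarrow> real \<Rightarrow> real \<Rightarrow> real" where
  "trialW R b x = 1 - (1/b) * max 0 (min x (R+b) - R) - (1/b) * max 0 (min (-x) (R+b) - R)"

definition trialD :: "real \<Rightarrow> real \<Rightarrow> real \<Rightarrow> real" where
  "trialD R b t = (1/b) * indicator {-R-b<..<-R} t - (1/b) * indicator {R<..<R+b} t"

lemma trialW_formula:
  assumes R: "R > 0" and b: "b > 0"
  shows "trialW R b x = 1 + (LBINT t=0..x. trialD R b t)"
proof -
  have i1: "interval_lebesgue_integrable lborel (ereal c) (ereal d) (indicator {-R-b<..<-R} :: real \<Rightarrow> real)" for c d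
    by (rule L2_interval_integrable[OF L2_ind])
  have i2: "interval_lebesgue_integrable lborel (ereal c) (ereal d) (indicator {R<..<R+b} :: real \<Rightarrow> real)" for c d
    by (rule L2_interval_integrable[OF L2_ind])
  have lin: "(LBINT t=ereal c..ereal d. trialD R b t) = (1/b) * (LBINT t=ereal c..ereal d. indicator {-R-b<..<-R} t) - (1/b) * (LBINT t=ereal c..ereal d. indicator {R<..<R+b} t)" for c d
  proof -
    have "(LBINT t=ereal c..ereal d. trialD R b t) = (LBINT t=ereal c..ereal d. (1/b) * indicator {-R-b<..<-R} t) - (LBINT t=ereal c..ereal d. (1/b) * indicator {R<..<R+b} t)"
      unfolding trialD_def
      by (rule interval_lebesgue_integral_diff(2)) (use i1 i2 in \<open>auto intro: interval_lebesgue_integrable_mult_right\<close>)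
    then show ?thesis by simp
  qed
  show ?thesis
  proof (cases "x \<ge> 0")
    case True
    have J1: "(LBINT t=ereal 0..ereal x. indicator {-R-b<..<-R} t :: real) = 0"
      using LBINT_ind[OF True, of "-R-b" "-R"] True R b by (simp add: min_def max_def)
    have J2: "(LBINT t=ereal 0..ereal x. indicator {R<..<R+b} t :: real) = max 0 (min x (R+b) - R)"
      using LBINT_ind[OF True, of R "R+b"] True R b by (simp add: max_def)
    have T: "max 0 (min (-x) (R+b) - R) = 0" using True R b by (simp add: min_def max_def)
    show ?thesis unfolding trialW_def zero_ereal_def lin J1 J2 T by simp
  next
    case False
    then have x0: "x \<le> 0" by simp
    have J1: "(LBINT t=ereal x..ereal 0. indicator {-R-b<..<-R} t :: real) = max 0 (min (-x) (R+b) - R)"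
      using LBINT_ind[OF x0, of "-R-b" "-R"] x0 R b by (simp add: min_def max_def)
    have J2: "(LBINT t=ereal x..ereal 0. indicator {R<..<R+b} t :: real) = 0"
      using LBINT_ind[OF x0, of R "R+b"] x0 R b by (simp add: min_def max_def)
    have T: "max 0 (min x (R+b) - R) = 0" using x0 R b by (simp add: min_def max_def)
    have "(LBINT t=ereal 0..ereal x. trialD R b t) = - (LBINT t=ereal x..ereal 0. trialD R b t)"
      by (rule interval_integral_endpoints_reverse)
    then show ?thesis unfolding trialW_def zero_ereal_def lin J1 J2 T by simp
  qed
qed

lemma trialW_props:
  assumes R: "R > 0" and b: "b > 0"
  shows "\<bar>x\<bar> \<le> R \<Longrightarrow> trialW R b x = 1"
    and "0 \<le> trialW R b x" and "trialW R b x \<le> 1"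
    and "\<bar>x\<bar> \<ge> R + b \<Longrightarrow> trialW R b x = 0"
proof -
  define T1 where "T1 = max 0 (min x (R+b) - R)"
  define T2 where "T2 = max 0 (min (-x) (R+b) - R)"
  have W: "trialW R b x = 1 - (1/b) * T1 - (1/b) * T2" unfolding trialW_def T1_def T2_def by simp
  have T1b: "0 \<le> T1" "T1 \<le> b" unfolding T1_def using b by (auto simp: min_def max_def)
  have T2b: "0 \<le> T2" "T2 \<le> b" unfolding T2_def using b by (auto simp: min_def max_def)
  have T12: "T1 = 0 \<or> T2 = 0" unfolding T1_def T2_def using R by (auto simp: min_def max_def)
  have "(1/b) * T1 \<le> 1" "(1/b) * T2 \<le> 1" using T1b T2b b by (auto simp: field_simps)
  moreover have "0 \<le> (1/b) * T1" "0 \<le> (1/b) * T2" using T1b T2b b by auto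
  ultimately show "0 \<le> trialW R b x" "trialW R b x \<le> 1" unfolding W using T12 by auto
  show "\<bar>x\<bar> \<le> R \<Longrightarrow> trialW R b x = 1"
  proof -
    assume "\<bar>x\<bar> \<le> R"
    then have "T1 = 0" "T2 = 0" unfolding T1_def T2_def by (auto simp: min_def max_def abs_le_iff)
    then show ?thesis unfolding W by simp
  qed
  show "\<bar>x\<bar> \<ge> R + b \<Longrightarrow> trialW R b x = 0"
  proof -
    assume a: "\<bar>x\<bar> \<ge> R + b"
    show ?thesis
    proof (cases "x \<ge> 0")
      case True
      then have "T1 = b" "T2 = 0" unfolding T1_def T2_def using a R b by (auto simp: min_def max_def)
      then show ?thesis unfolding W using b by simp
    next
      case False
      then have "T1 = 0" "T2 = b" unfolding T1_def T2_def using a R b by (auto simp: min_def max_def)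
      then show ?thesis unfolding W using b by simp
    qed
  qed
qed

lemma trialD_L2: "L2 (trialD R b)"
proof -
  have "L2 (\<lambda>t. (1/b) * indicator {-R-b<..<-R} t + (-(1/b)) * indicator {R<..<R+b} t)"
    by (intro L2_lin L2_ind)
  moreover have "(\<lambda>t. (1/b) * indicator {-R-b<..<-R} t + (-(1/b)) * indicator {R<..<R+b} t) = trialD R b"
    unfolding trialD_def by (auto simp: fun_eq_iff)
  ultimately show ?thesis by simp
qed

lemma trialW_bound_sq:
  assumes R: "R > 0" and b: "b > 0"
  shows "(trialW R b x)\<^sup>2 \<le> indicator {-(R+b)..R+b} x"
proof (cases "x \<in> {-(R+b)..R+b}")
  case True
  have "0 \<le> trialW R b x" "trialW R b x \<le> 1" using trialW_props[OF R b] by auto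
  then have "(trialW R b x)\<^sup>2 \<le> 1" by (simp add: power_le_one)
  then show ?thesis using True by simp
next
  case False
  then have "\<bar>x\<bar> \<ge> R + b" by auto
  then have "trialW R b x = 0" using trialW_props(4)[OF R b] by simp
  then show ?thesis by simp
qed

lemma trialW_L2:
  assumes R: "R > 0" and b: "b > 0"
  shows "L2 (trialW R b)"
  unfolding L2_def
proof
  show m: "trialW R b \<in> borel_measurable lborel" unfolding trialW_def[abs_def] by measurable
  show "integrable lborel (\<lambda>x. (trialW R b x)\<^sup>2)"
  proof (rule Bochner_Integration.integrable_bound)
    show "integrable lborel (indicator {-(R+b)..R+b} :: real \<Rightarrow> real)"
      using emeasure_bounded_finite[OF bounded_closed_interval[of "-(R+b)" "R+b"]]
      by (simp add: integrable_indicator_iff)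
    show "(\<lambda>x. (trialW R b x)\<^sup>2) \<in> borel_measurable lborel" using m by measurable
    show "AE x in lborel. norm ((trialW R b x)\<^sup>2) \<le> norm (indicator {-(R+b)..R+b} x :: real)"
      using trialW_bound_sq[OF R b] by (intro AE_I2) simp
  qed
qed

lemma trial_H1:
  assumes R: "R > 0" and b: "b > 0"
  shows "H1 (trialW R b) (trialD R b)"
proof (rule H1_intro[OF trialW_L2[OF R b] trialD_L2])
  fix x
  have "trialW R b 0 = 1" using trialW_props(1)[OF R b, of 0] R by simp
  then show "trialW R b x = trialW R b 0 + (LBINT t=0..x. trialD R b t)"
    using trialW_formula[OF R b, of x] by simp
qed

lemma trial_ipD:
  assumes R: "R > 0" and b: "b > 0"
  shows "ip (trialD R b) (trialD R b) = 2 / b"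
proof -
  have "ip (trialD R b) (trialD R b) = (\<integral>t. (1/b)\<^sup>2 * indicator {-R-b<..<-R} t + (1/b)\<^sup>2 * indicator {R<..<R+b} t \<partial>lborel)"
    unfolding ip_def trialD_def
    by (rule Bochner_Integration.integral_cong) (use R b in \<open>auto simp: indicator_def power2_eq_square\<close>)
  also have "\<dots> = (1/b)\<^sup>2 * b + (1/b)\<^sup>2 * b"
  proof -
    have i1: "integrable lborel (indicator {-R-b<..<-R} :: real \<Rightarrow> real)"
      using emeasure_bounded_finite[OF bounded_Ioo[of "-R-b" "-R"]] by (simp add: integrable_indicator_iff)
    have i2: "integrable lborel (indicator {R<..<R+b} :: real \<Rightarrow> real)"
      using emeasure_bounded_finite[OF bounded_Ioo[of "R" "R+b"]] by (simp add: integrable_indicator_iff)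
    have m1: "measure lborel {-R-b<..<-R} = b" using b by simp
    have m2: "measure lborel {R<..<R+b} = b" using b by simp
    show ?thesis using i1 i2 m1 m2 by simp
  qed
  also have "\<dots> = 2 / b" using b by (simp add: power2_eq_square field_simps)
  finally show ?thesis .
qed

lemma trial_ipW:
  assumes R: "R > 0" and b: "b > 0"
  shows "ip (trialW R b) (trialW R b) \<le> 2 * (R + b)"
proof -
  have "ip (trialW R b) (trialW R b) = (\<integral>x. (trialW R b x)\<^sup>2 \<partial>lborel)" by (rule ip_sq)
  also have "\<dots> \<le> (\<integral>x. indicator {-(R+b)..R+b} x \<partial>lborel)"
  proof (rule integral_mono)
    show "integrable lborel (\<lambda>x. (trialW R b x)\<^sup>2)" using trialW_L2[OF R b] by (simp add: L2_def)
    show "integrable lborel (\<lambda>x. indicator {-(R+b)..R+b} x :: real)"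
      using emeasure_bounded_finite[OF bounded_closed_interval[of "-(R+b)" "R+b"]]
      by (simp add: integrable_indicator_iff)
    show "(trialW R b x)\<^sup>2 \<le> indicator {-(R+b)..R+b} x" for x by (rule trialW_bound_sq[OF R b])
  qed
  also have "\<dots> = 2 * (R + b)" using R b by simp
  finally show ?thesis .
qed

context pot
begin

lemma trial_QB:
  assumes R: "R > 0" and b: "b > 0" and Vout: "AE x in lborel. \<bar>x\<bar> > R \<longrightarrow> V x \<le> 0"
  shows "QB (trialW R b) (trialW R b) \<le> (LBINT x=-R..R. V x)"
proof -
  have LB: "(LBINT x=-R..R. V x) = (\<integral>x. indicator {-R<..<R} x * V x \<partial>lborel)"
    using LBINT_ip[of "-R" R V] R unfolding ip_def by simp
  have "QB (trialW R b) (trialW R b) \<le> (\<integral>x. indicator {-R<..<R} x * V x \<partial>lborel)"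
    unfolding QB_def
  proof (rule integral_mono_AE)
    show "integrable lborel (\<lambda>x. V x * trialW R b x * trialW R b x)"
      by (rule QB_int[OF trialW_L2[OF R b] trialW_L2[OF R b]])
    show "integrable lborel (\<lambda>x. indicator {-R<..<R} x * V x)"
    proof (rule Bochner_Integration.integrable_bound)
      show "integrable lborel (\<lambda>x. C * indicator {-R<..<R} x)"
        using emeasure_bounded_finite[OF bounded_Ioo[of "-R" R]] by (simp add: integrable_indicator_iff)
      show "(\<lambda>x. indicator {-R<..<R} x * V x) \<in> borel_measurable lborel" by measurable
      show "AE x in lborel. norm (indicator {-R<..<R} x * V x) \<le> norm (C * indicator {-R<..<R} x)"
        using VC by eventually_elim (use C0 in \<open>auto simp: indicator_def\<close>)
    qed
    show "AE x in lborel. V x * trialW R b x * trialW R b x \<le> indicator {-R<..<R} x * V x"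
      using Vout AE_lborel_singleton[of R] AE_lborel_singleton[of "-R"]
    proof eventually_elim
      case (elim x)
      show ?case
      proof (cases "\<bar>x\<bar> < R")
        case True
        then have "trialW R b x = 1" using trialW_props(1)[OF R b] by simp
        moreover have "indicator {-R<..<R} x = (1::real)" using True by (auto simp: indicator_def abs_less_iff)
        ultimately show ?thesis by simp
      next
        case False
        then have "\<bar>x\<bar> > R" using elim by (auto simp: abs_if split: if_splits)
        then have "V x \<le> 0" using elim by simp
        moreover have "indicator {-R<..<R} x = (0::real)" using False by (auto simp: indicator_def abs_less_iff)
        ultimately show ?thesis by (simp add: mult_nonpos_nonneg mult.assoc)
      qed
    qed
  qed
  then show ?thesis using LB by simp
qed

end

lemma limit_alg:
  fixes f :: "real \<Rightarrow> real" and c A :: real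
  assumes c: "c > 0" and A: "A > 0" and H: "\<And>\<beta>. 0 < \<beta> \<Longrightarrow> \<beta> < 1 \<Longrightarrow> f \<beta> \<le> - c / (A * sqrt \<beta>)"
  shows "filterlim f at_bot (at_right 0)"
  unfolding filterlim_at_bot
proof
  fix Z :: real
  define q where "q = c / (A * (\<bar>Z\<bar> + 1))"
  have q0: "q > 0" unfolding q_def using c A by (simp add: add_pos_nonneg)
  define \<delta> where "\<delta> = min 1 (q\<^sup>2)"
  have d0: "\<delta> > 0" unfolding \<delta>_def using q0 by simp
  show "eventually (\<lambda>x. f x \<le> Z) (at_right 0)"
    unfolding eventually_at_right_field
  proof (intro exI conjI allI impI)
    show "(0::real) < \<delta>" by (rule d0)
    fix y :: real assume y0: "0 < y" and yd: "y < \<delta>"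
    have y1: "y < 1" using yd unfolding \<delta>_def by simp
    have "sqrt y < sqrt \<delta>" using yd by (rule real_sqrt_less_mono)
    also have "sqrt \<delta> \<le> sqrt (q\<^sup>2)" unfolding \<delta>_def by (intro real_sqrt_le_mono) simp
    also have "sqrt (q\<^sup>2) = q" using q0 by simp
    finally have s: "sqrt y < q" .
    have sy: "sqrt y > 0" using y0 by simp
    have "sqrt y * (A * (\<bar>Z\<bar> + 1)) < c"
      using s unfolding q_def using A by (simp add: pos_less_divide_eq add_pos_nonneg)
    then have "(\<bar>Z\<bar> + 1) * (A * sqrt y) < c" by (simp add: algebra_simps)
    then have "\<bar>Z\<bar> + 1 < c / (A * sqrt y)" using A sy by (simp add: pos_less_divide_eq)
    then have "- c / (A * sqrt y) < - (\<bar>Z\<bar> + 1)" by simp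
    moreover have "f y \<le> - c / (A * sqrt y)" by (rule H[OF y0 y1])
    ultimately show "f y \<le> Z" by linarith
  qed
qed

theorem lemma3p4:
  fixes V :: "real \<Rightarrow> real" and R :: real
  assumes R_pos: "R > 0"
    and V_meas: "V \<in> borel_measurable lborel"
    and V_Linf: "\<exists>C. AE x in lborel. \<bar>V x\<bar> \<le> C"
    and V_decay: "\<forall>\<epsilon>>0. \<exists>r. AE x in lborel. \<bar>x\<bar> > r \<longrightarrow> \<bar>V x\<bar> < \<epsilon>"
    and V_int_neg: "(LBINT x=-R..R. V x) < 0"
    and V_nonpos_out: "AE x in lborel. \<bar>x\<bar> > R \<longrightarrow> V x \<le> 0"
  shows "(\<forall>\<beta>>0. \<exists>\<mu><0. K_eigenvalue V \<beta> \<mu>) \<and> filterlim (mu1 V) at_bot (at_right 0)"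
proof -
  obtain C1 where "AE x in lborel. \<bar>V x\<bar> \<le> C1" using V_Linf by blast
  then have VC1: "AE x in lborel. \<bar>V x\<bar> \<le> \<bar>C1\<bar>" by eventually_elim auto
  interpret pot V "\<bar>C1\<bar>"
    by unfold_locales (use V_meas VC1 in auto)
  define c where "c = - (LBINT x=-R..R. V x)"
  have c0: "c > 0" unfolding c_def using V_int_neg by simp
  have decay: "\<And>e. e > 0 \<Longrightarrow> \<exists>r. AE x in lborel. \<bar>x\<bar> > r \<longrightarrow> \<bar>V x\<bar> < e" using V_decay by blast
  have key: "(\<exists>\<mu><0. K_eigenvalue V \<beta> \<mu>) \<and> mu1 V \<beta> \<le> - c / (2 / b + \<beta> * (2 * (R + b)))"
    if b0: "\<beta> > 0" and bb: "b > 0" for \<beta> b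
  proof -
    have H: "H1 (trialW R b) (trialD R b)" by (rule trial_H1[OF R_pos bb])
    have Ew: "E \<beta> (trialW R b) (trialD R b) = 2 / b + \<beta> * ip (trialW R b) (trialW R b)"
      unfolding E_def trial_ipD[OF R_pos bb] ..
    have "\<beta> * ip (trialW R b) (trialW R b) \<ge> 0" using b0 ip_nonneg[of "trialW R b"] by simp
    moreover have "2 / b > 0" using bb by simp
    ultimately have Epos: "E \<beta> (trialW R b) (trialD R b) > 0" unfolding Ew by linarith
    have "\<beta> * ip (trialW R b) (trialW R b) \<le> \<beta> * (2 * (R + b))"
      using trial_ipW[OF R_pos bb] b0 by (intro mult_left_mono) auto
    then have Ele: "E \<beta> (trialW R b) (trialD R b) \<le> 2 / b + \<beta> * (2 * (R + b))" unfolding Ew by linarith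
    have Q: "QB (trialW R b) (trialW R b) \<le> - c"
      using trial_QB[OF R_pos bb V_nonpos_out] unfolding c_def by simp
    then have Qneg: "QB (trialW R b) (trialW R b) < 0" using c0 by linarith
    from main_beta[OF b0 decay H Epos Qneg]
    have ev: "\<exists>\<mu><0. K_eigenvalue V \<beta> \<mu>" and m1: "mu1 V \<beta> \<le> QB (trialW R b) (trialW R b) / E \<beta> (trialW R b) (trialD R b)"
      by auto
    have "QB (trialW R b) (trialW R b) / E \<beta> (trialW R b) (trialD R b) \<le> - c / E \<beta> (trialW R b) (trialD R b)"
      using Q Epos by (intro divide_right_mono) auto
    also have "c / (2 / b + \<beta> * (2 * (R + b))) \<le> c / E \<beta> (trialW R b) (trialD R b)"
      using c0 Epos Ele by (intro divide_left_mono) auto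
    then have "- c / E \<beta> (trialW R b) (trialD R b) \<le> - c / (2 / b + \<beta> * (2 * (R + b)))" by simp
    finally show ?thesis using ev m1 by auto
  qed
  have part1: "\<forall>\<beta>>0. \<exists>\<mu><0. K_eigenvalue V \<beta> \<mu>" using key[of _ 1] by auto
  have bnd: "mu1 V \<beta> \<le> - c / ((4 + 2 * R) * sqrt \<beta>)" if b0: "0 < \<beta>" and b1: "\<beta> < 1" for \<beta>
  proof -
    define b where "b = 1 / sqrt \<beta>"
    have sb: "sqrt \<beta> > 0" using b0 by simp
    have bb: "b > 0" unfolding b_def using sb by simp
    have ss: "sqrt \<beta> * sqrt \<beta> = \<beta>" using b0 by simp
    have eq: "2 / b + \<beta> * (2 * (R + b)) = 4 * sqrt \<beta> + 2 * R * \<beta>"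
    proof -
      have "2 / b = 2 * sqrt \<beta>" unfolding b_def by simp
      moreover have "\<beta> * b = sqrt \<beta>" unfolding b_def using ss sb by (simp add: field_simps)
      ultimately show ?thesis by (simp add: algebra_simps)
    qed
    have "\<beta> \<le> sqrt \<beta>"
    proof -
      have "sqrt \<beta> \<le> 1" using b1 by simp
      then have "sqrt \<beta> * sqrt \<beta> \<le> 1 * sqrt \<beta>" using sb by (intro mult_right_mono) auto
      then show ?thesis using ss by simp
    qed
    then have "2 * R * \<beta> \<le> 2 * R * sqrt \<beta>" using R_pos by simp
    then have le: "4 * sqrt \<beta> + 2 * R * \<beta> \<le> (4 + 2 * R) * sqrt \<beta>" by (simp add: algebra_simps)
    have pos: "0 < 4 * sqrt \<beta> + 2 * R * \<beta>" using sb b0 R_pos by (simp add: add_pos_nonneg)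
    have "mu1 V \<beta> \<le> - c / (4 * sqrt \<beta> + 2 * R * \<beta>)" using key[OF b0 bb] unfolding eq by simp
    also have "c / ((4 + 2 * R) * sqrt \<beta>) \<le> c / (4 * sqrt \<beta> + 2 * R * \<beta>)"
      using c0 pos le by (intro divide_left_mono) auto
    then have "- c / (4 * sqrt \<beta> + 2 * R * \<beta>) \<le> - c / ((4 + 2 * R) * sqrt \<beta>)" by simp
    finally show ?thesis .
  qed
  have "filterlim (mu1 V) at_bot (at_right 0)"
    by (rule limit_alg[OF c0 _ bnd]) (use R_pos in simp)
  with part1 show ?thesis by blast
qed

end
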